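(* There is a universal constant $c>0$ such that for infinitely many $k$ there exist collaborative learning problems with $k$ agents, strategy space $\mathbb{R}_+^k$ and well-behaved utility functions whose Price of Stability and Price of Fairness are both at least $c\sqrt{k}$. Moreover, such problems exist in each of the following two settings: (a) a random coverage setting in which every agent's distribution is uniform over a subset of the domain, all subsets having the same size; (b) a linear utility setting ${\bf u}({\boldsymbol\theta})=W{\boldsymbol\theta}$ with $W_{ii}=1$ and $W_{ij}=O(1/\sqrt{k})$ for $j\ne i$.
   Context: A collaborative learning problem has $k$ agents, strategy space $\Theta\subseteq\mathbb{R}_+^k$, non-decreasing utilities $u_i$ and thresholds $\mu_i$, each agent able to meet her threshold alone with some $\vartheta_i$ (i.e. $u_i(\vartheta_i,\mathbf{0}_{-i})\ge\mu_i$, where $(x,{\boldsymbol\theta}_{-i})$ replaces the $i$-th entry by $x$). ${\boldsymbol\theta}$ is feasible if $u_i({\boldsymbol\theta})\ge\mu_i$ for all $i$. A socially optimal solution minimizes $\mathbf{1}^\top{\boldsymbol\theta}$ over feasible ${\boldsymbol\theta}\in\Theta$. A feasible ${\boldsymbol\theta}$ is a stable equilibrium if no $i$ has $\theta_i'<\theta_i$ with $(\theta_i',{\boldsymbol\theta}_{-i})\in\Theta$, $u_i(\theta_i',{\boldsymbol\theta}_{-i})\ge\mu_i$; it is envy-free if no $i,j$ have $\theta_j<\theta_i$, ${\boldsymbol\theta}^{(i,j)}\in\Theta$ and $u_i({\boldsymbol\theta}^{(i,j)})\ge\mu_i$, where ${\boldsymbol\theta}^{(i,j)}$ swaps entries $i,j$.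 Price of Stability $=\min_{{\boldsymbol\theta}\text{ stable eq.}}\mathbf{1}^\top{\boldsymbol\theta}/\mathbf{1}^\top{\boldsymbol\theta}^{\mathrm{opt}}$; Price of Fairness $=\min_{{\boldsymbol\theta}\text{ envy-free}}\mathbf{1}^\top{\boldsymbol\theta}/\mathbf{1}^\top{\boldsymbol\theta}^{\mathrm{opt}}$, with ${\boldsymbol\theta}^{\mathrm{opt}}$ socially optimal. Utilities are well-behaved over a box $\prod_i[0,C_i]\subseteq\Theta$ (here the box $\prod_i[0,\vartheta_i]$) if for each $i$ there are $c_1^i\ge0,c_2^i>0$ with $\partial u_i/\partial\theta_i\ge c_2^i$ and $0\le\partial u_i/\partial\theta_j\le c_1^i$ ($j\ne i$) on the box (one-sided derivatives where needed). Random coverage: finite domain $\mathcal{X}$, agent $i$ has distribution $(q_{ix})_{x\in\mathcal{X}}$; for integers $m_j$, $U_i({\bf m})=1-\frac12\sum_{x}q_{ix}\prod_{j}(1-q_{jx})^{m_j}$; for real ${\boldsymbol\theta}$, $u_i({\boldsymbol\theta})=\mathbb{E}[U_i({\bf m})]$ where the $m_j$ are independent and $m_j=\lfloor\theta_j\rfloor+\mathrm{Bernoulli}(\theta_j-\lfloor\theta_j\rfloor)$. Linear setting: $u_i({\boldsymbol\theta})=\sum_jW_{ij}\theta_j$ with $W\in[0,1]^{k\times k}$. *)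

theory Defs
  imports "HOL-Analysis.Analysis" "HOL-Probability.Probability"
begin

text \<open>Agents are indexed by 0..k-1. A strategy profile is a function nat => real;
  members of the strategy spaces below vanish outside {..<k}.\<close>

definition nonneg_orthant :: "nat \<Rightarrow> (nat \<Rightarrow> real) set" where
  "nonneg_orthant k = {\<theta>. (\<forall>i<k. 0 \<le> \<theta> i) \<and> (\<forall>i. k \<le> i \<longrightarrow> \<theta> i = 0)}"

definition cost :: "nat \<Rightarrow> (nat \<Rightarrow> real) \<Rightarrow> real" where
  "cost k \<theta> = (\<Sum>i<k. \<theta> i)"

definition alone :: "nat \<Rightarrow> real \<Rightarrow> (nat \<Rightarrow> real)" where
  "alone i x = (\<lambda>j. if j = i then x else 0)"

definition collab_problem ::
  "nat \<Rightarrow> (nat \<Rightarrow> real) set \<Rightarrow> (nat \<Rightarrow> (nat \<Rightarrow> real) \<Rightarrow> real) \<Rightarrow> (nat \<Rightarrow> real)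
    \<Rightarrow> (nat \<Rightarrow> real) \<Rightarrow> bool" where
  "collab_problem k \<Theta> u \<mu> vt \<longleftrightarrow>
     \<Theta> \<subseteq> nonneg_orthant k \<and>
     (\<forall>i<k. \<forall>\<theta>\<in>\<Theta>. \<forall>\<theta>'\<in>\<Theta>. (\<forall>j<k. \<theta> j \<le> \<theta>' j) \<longrightarrow> u i \<theta> \<le> u i \<theta>') \<and>
     (\<forall>i<k. 0 \<le> vt i \<and> alone i (vt i) \<in> \<Theta> \<and> \<mu> i \<le> u i (alone i (vt i)))"

definition feasible where
  "feasible k \<Theta> u \<mu> \<theta> \<longleftrightarrow> \<theta> \<in> \<Theta> \<and> (\<forall>i<k. \<mu> i \<le> u i \<theta>)"

definition socially_optimal where
  "socially_optimal k \<Theta> u \<mu> \<theta> \<longleftrightarrow> feasible k \<Theta> u \<mu> \<theta> \<and>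
     (\<forall>\<theta>'. feasible k \<Theta> u \<mu> \<theta>' \<longrightarrow> cost k \<theta> \<le> cost k \<theta>')"

definition stable_eq where
  "stable_eq k \<Theta> u \<mu> \<theta> \<longleftrightarrow> feasible k \<Theta> u \<mu> \<theta> \<and>
     \<not> (\<exists>i<k. \<exists>x. x < \<theta> i \<and> \<theta>(i := x) \<in> \<Theta> \<and> \<mu> i \<le> u i (\<theta>(i := x)))"

definition swap_entries :: "(nat \<Rightarrow> real) \<Rightarrow> nat \<Rightarrow> nat \<Rightarrow> (nat \<Rightarrow> real)" where
  "swap_entries \<theta> i j = \<theta>(i := \<theta> j, j := \<theta> i)"

definition envy_free where
  "envy_free k \<Theta> u \<mu> \<theta> \<longleftrightarrow> feasible k \<Theta> u \<mu> \<theta> \<and>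
     \<not> (\<exists>i<k. \<exists>j<k. \<theta> j < \<theta> i \<and> swap_entries \<theta> i j \<in> \<Theta> \<and>
            \<mu> i \<le> u i (swap_entries \<theta> i j))"

definition opt_cost where
  "opt_cost k \<Theta> u \<mu> = Inf (cost k ` {\<theta>. feasible k \<Theta> u \<mu> \<theta>})"

definition price_of_stability where
  "price_of_stability k \<Theta> u \<mu> =
     Inf (cost k ` {\<theta>. stable_eq k \<Theta> u \<mu> \<theta>}) / opt_cost k \<Theta> u \<mu>"

definition price_of_fairness where
  "price_of_fairness k \<Theta> u \<mu> =
     Inf (cost k ` {\<theta>. envy_free k \<Theta> u \<mu> \<theta>}) / opt_cost k \<Theta> u \<mu>"

definition box :: "nat \<Rightarrow> (nat \<Rightarrow> real) \<Rightarrow> (nat \<Rightarrow> real) set" where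
  "box k C = {\<theta>. (\<forall>i<k. 0 \<le> \<theta> i \<and> \<theta> i \<le> C i) \<and> (\<forall>i. k \<le> i \<longrightarrow> \<theta> i = 0)}"

definition well_behaved ::
  "nat \<Rightarrow> (nat \<Rightarrow> (nat \<Rightarrow> real) \<Rightarrow> real) \<Rightarrow> (nat \<Rightarrow> real) \<Rightarrow> bool" where
  "well_behaved k u C \<longleftrightarrow>
     (\<forall>i<k. \<exists>c1 c2. 0 \<le> c1 \<and> 0 < c2 \<and>
        (\<forall>\<theta>\<in>box k C. \<forall>j<k.
           (let ok = (\<lambda>D::real. if j = i then c2 \<le> D else 0 \<le> D \<and> D \<le> c1);
                g = (\<lambda>t. u i (\<theta>(j := t)))
            in (\<theta> j < C j \<longrightarrow> (\<exists>D. (g has_real_derivative D) (at (\<theta> j) within {\<theta> j..}) \<and> ok D)) \<and>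
               (0 < \<theta> j \<longrightarrow> (\<exists>D. (g has_real_derivative D) (at (\<theta> j) within {..\<theta> j}) \<and> ok D)))))"

text \<open>Random coverage. q i x: probability of point x under agent i's distribution.\<close>
definition coverage_U ::
  "nat \<Rightarrow> nat set \<Rightarrow> (nat \<Rightarrow> nat \<Rightarrow> real) \<Rightarrow> nat \<Rightarrow> (nat \<Rightarrow> nat) \<Rightarrow> real" where
  "coverage_U k X q i m = 1 - (1/2) * (\<Sum>x\<in>X. q i x * (\<Prod>j<k. (1 - q j x) ^ m j))"

definition sample_count :: "real \<Rightarrow> nat pmf" where
  "sample_count t = map_pmf (\<lambda>b. nat \<lfloor>t\<rfloor> + (if b then 1 else 0)) (bernoulli_pmf (t - of_int \<lfloor>t\<rfloor>))"

definition coverage_u ::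
  "nat \<Rightarrow> nat set \<Rightarrow> (nat \<Rightarrow> nat \<Rightarrow> real) \<Rightarrow> nat \<Rightarrow> (nat \<Rightarrow> real) \<Rightarrow> real" where
  "coverage_u k X q i \<theta> =
     measure_pmf.expectation (Pi_pmf {..<k} 0 (\<lambda>j. sample_count (\<theta> j))) (coverage_U k X q i)"

definition uniform_q :: "(nat \<Rightarrow> nat set) \<Rightarrow> nat \<Rightarrow> nat \<Rightarrow> real" where
  "uniform_q S i x = pmf (pmf_of_set (S i)) x"

definition linear_u :: "nat \<Rightarrow> (nat \<Rightarrow> nat \<Rightarrow> real) \<Rightarrow> nat \<Rightarrow> (nat \<Rightarrow> real) \<Rightarrow> real" where
  "linear_u k W i \<theta> = (\<Sum>j<k. W i j * \<theta> j)"

text \<open>"PoS and PoF are both at least r": stable equilibria, envy-free solutions and a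
  socially optimal solution exist, and the two ratios are at least r.\<close>
definition bad_prices where
  "bad_prices k \<Theta> u \<mu> r \<longleftrightarrow>
     (\<exists>\<theta>. socially_optimal k \<Theta> u \<mu> \<theta>) \<and>
     (\<exists>\<theta>. stable_eq k \<Theta> u \<mu> \<theta>) \<and> (\<exists>\<theta>. envy_free k \<Theta> u \<mu> \<theta>) \<and>
     r \<le> price_of_stability k \<Theta> u \<mu> \<and> r \<le> price_of_fairness k \<Theta> u \<mu>"

end

theory Submission
  imports Defs
begin

definition phi :: "real \<Rightarrow> real \<Rightarrow> real" where
  "phi a t = measure_pmf.expectation (sample_count t) (\<lambda>n. (1 - a) ^ n)"

lemma phi_formula: "phi a t = (1-a)^(nat \<lfloor>t\<rfloor>) * (1 - (t - of_int \<lfloor>t\<rfloor>) * a)"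
proof -
  have p: "0 \<le> t - of_int \<lfloor>t\<rfloor>" "t - of_int \<lfloor>t\<rfloor> \<le> 1"
    by linarith+
  show ?thesis unfolding phi_def sample_count_def
    using p by (simp add: algebra_simps)
qed

lemma finite_set_sample_count: "finite (set_pmf (sample_count t))"
  unfolding sample_count_def by simp

lemma finite_set_Pi: "finite (set_pmf (Pi_pmf {..<k::nat} 0 (\<lambda>j. sample_count (\<theta> j))))"
  by (subst set_Pi_pmf) (auto simp: finite_set_sample_count intro!: finite_PiE_dflt)

definition F :: "nat \<Rightarrow> nat set \<Rightarrow> (nat \<Rightarrow> nat \<Rightarrow> real) \<Rightarrow> nat \<Rightarrow> (nat \<Rightarrow> real) \<Rightarrow> real" where
  "F k X q i \<theta> = 1 - 1/2 * (\<Sum>x\<in>X. q i x * (\<Prod>j<k. phi (q j x) (\<theta> j)))"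

lemma cov_F:
  assumes X: "finite X" and q1: "\<And>j x. j < k \<Longrightarrow> x \<in> X \<Longrightarrow> q j x \<le> 1"
  shows "coverage_u k X q i \<theta> = F k X q i \<theta>"
proof -
  let ?P = "Pi_pmf {..<k} 0 (\<lambda>j. sample_count (\<theta> j))"
  have int: "integrable (measure_pmf ?P) f" for f :: "_ \<Rightarrow> real"
    by (rule integrable_measure_pmf_finite[OF finite_set_Pi])
  have e: "measure_pmf.expectation ?P (\<lambda>m. \<Prod>j<k. (1 - q j x) ^ m j) = (\<Prod>j<k. phi (q j x) (\<theta> j))"
    if "x \<in> X" for x
    unfolding phi_def
    by (rule expectation_prod_Pi_pmf) (auto intro!: integrable_measure_pmf_finite finite_set_sample_count q1 that zero_le_power)
  have "coverage_u k X q i \<theta> = measure_pmf.expectation ?P (\<lambda>m. 1 - 1/2 * (\<Sum>x\<in>X. q i x * (\<Prod>j<k. (1 - q j x) ^ m j)))"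
    unfolding coverage_u_def coverage_U_def by simp
  also have "\<dots> = 1 - 1/2 * (\<Sum>x\<in>X. q i x * measure_pmf.expectation ?P (\<lambda>m. \<Prod>j<k. (1 - q j x) ^ m j))"
    by (simp add: int integral_sum)
  also have "\<dots> = F k X q i \<theta>"
    unfolding F_def using e by simp
  finally show ?thesis .
qed

lemma phi_at0[simp]: "phi a 0 = 1" by (simp add: phi_formula)

lemma phi_0[simp]: "phi 0 t = 1"
  by (simp add: phi_formula)

lemma phi_nonneg: "0 \<le> a \<Longrightarrow> a \<le> 1 \<Longrightarrow> 0 \<le> phi a t"
proof -
  assume a: "0 \<le> a" "a \<le> 1"
  have "(t - of_int \<lfloor>t\<rfloor>) * a \<le> 1"
    using a by (intro mult_le_one) linarith+
  then show ?thesis using a by (simp add: phi_formula)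
qed

lemma phi_le1: "0 \<le> a \<Longrightarrow> a \<le> 1 \<Longrightarrow> phi a t \<le> 1"
proof -
  assume a: "0 \<le> a" "a \<le> 1"
  have "0 \<le> (t - of_int \<lfloor>t\<rfloor>) * a" using a by simp
  moreover have "(t - of_int \<lfloor>t\<rfloor>) * a \<le> 1" using a by (intro mult_le_one) linarith+
  moreover have "(1-a)^(nat \<lfloor>t\<rfloor>) \<le> 1" "0 \<le> (1-a)^(nat \<lfloor>t\<rfloor>)" using a by (auto intro: power_le_one)
  ultimately show ?thesis unfolding phi_formula
    by (intro mult_le_one) auto
qed

lemma phi_lin: "0 \<le> t \<Longrightarrow> t \<le> 1 \<Longrightarrow> phi a t = 1 - a * t"
proof -
  assume t: "0 \<le> t" "t \<le> 1"
  show ?thesis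
  proof (cases "t = 1")
    case True then show ?thesis by (simp add: phi_formula)
  next
    case False
    then have "\<lfloor>t\<rfloor> = 0" using t by (simp add: floor_eq_iff)
    then show ?thesis by (simp add: phi_formula)
  qed
qed

lemma phi_ge: assumes a: "0 \<le> a" "a \<le> 1" and t: "0 \<le> t" shows "1 - a * t \<le> phi a t"
proof -
  define n where "n = nat \<lfloor>t\<rfloor>"
  define f where "f = t - of_int \<lfloor>t\<rfloor>"
  have tn: "t = real n + f" unfolding n_def f_def using t by simp
  have f: "0 \<le> f" "f \<le> 1" unfolding f_def by linarith+
  have b: "1 - real n * a \<le> (1 - a) ^ n"
    using Bernoulli_inequality[of "-a" n] a by simp
  have fa: "0 \<le> 1 - f * a" using f a by (smt (verit) mult_le_one)
  have pe: "phi a t = (1 - a) ^ n * (1 - f * a)" unfolding phi_formula n_def f_def ..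
  show ?thesis
  proof (cases "0 \<le> 1 - real n * a")
    case True
    have "(1 - real n * a) * (1 - f * a) \<le> (1 - a) ^ n * (1 - f * a)"
      using b fa by (rule mult_right_mono)
    moreover have "1 - a * t \<le> (1 - real n * a) * (1 - f * a)"
      unfolding tn using f a by (simp add: algebra_simps)
    ultimately show ?thesis using pe by linarith
  next
    case False
    have "1 - a * t \<le> 1 - real n * a" unfolding tn using f a by (simp add: algebra_simps)
    then show ?thesis using False phi_nonneg[OF a, of t] by linarith
  qed
qed

lemma phi_mono: assumes a: "0 \<le> a" "a \<le> 1" and st: "0 \<le> s" "s \<le> t" shows "phi a t \<le> phi a s"
proof -
  have fs: "0 \<le> s - of_int \<lfloor>s\<rfloor>" "s - of_int \<lfloor>s\<rfloor> \<le> 1" by linarith+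
  have ft: "0 \<le> t - of_int \<lfloor>t\<rfloor>" "t - of_int \<lfloor>t\<rfloor> \<le> 1" by linarith+
  have fl: "\<lfloor>s\<rfloor> \<le> \<lfloor>t\<rfloor>" using st by (simp add: floor_mono)
  have p0: "0 \<le> (1 - a) ^ m" for m using a by simp
  show ?thesis
  proof (cases "\<lfloor>s\<rfloor> = \<lfloor>t\<rfloor>")
    case True
    have "(t - of_int \<lfloor>t\<rfloor>) * a \<ge> (s - of_int \<lfloor>s\<rfloor>) * a"
      using True st a by (intro mult_right_mono) auto
    then show ?thesis unfolding phi_formula True
      using p0 by (intro mult_left_mono) auto
  next
    case False
    then have lt: "nat \<lfloor>s\<rfloor> + 1 \<le> nat \<lfloor>t\<rfloor>" using fl st by linarith
    have "phi a t \<le> (1 - a) ^ nat \<lfloor>t\<rfloor>"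
      unfolding phi_formula using p0 ft a
      by (simp add: mult_left_le)
    also have "\<dots> \<le> (1 - a) ^ (nat \<lfloor>s\<rfloor> + 1)"
      using a lt by (intro power_decreasing) auto
    also have "\<dots> = (1 - a) ^ nat \<lfloor>s\<rfloor> * (1 - 1 * a)" by simp
    also have "\<dots> \<le> phi a s"
      unfolding phi_formula using p0 fs a
      by (intro mult_left_mono) (auto intro: mult_left_le_one_le)
    finally show ?thesis .
  qed
qed

lemma prod_ge_1_minus_sum:
  fixes c :: "'a \<Rightarrow> real"
  assumes "finite A" "\<And>i. i \<in> A \<Longrightarrow> 0 \<le> c i \<and> c i \<le> 1"
  shows "1 - (\<Sum>i\<in>A. 1 - c i) \<le> (\<Prod>i\<in>A. c i)"
  using assms
proof (induction A rule: finite_induct)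
  case empty then show ?case by simp
next
  case (insert x A)
  let ?S = "\<Sum>i\<in>A. 1 - c i" and ?P = "\<Prod>i\<in>A. c i"
  have S: "0 \<le> ?S" using insert by (intro sum_nonneg) auto
  have IH: "1 - ?S \<le> ?P" using insert by auto
  have c: "0 \<le> c x" "c x \<le> 1" using insert by auto
  have "c x * (1 - ?S) \<le> c x * ?P" using IH c by (intro mult_left_mono) auto
  moreover have "c x * ?S \<le> ?S" using c S by (simp add: mult_left_le_one_le)
  ultimately show ?case using insert by (simp add: algebra_simps)
qed

definition M :: "nat set \<Rightarrow> (nat \<Rightarrow> nat \<Rightarrow> real) \<Rightarrow> nat \<Rightarrow> nat \<Rightarrow> real" where
  "M X q i j = (\<Sum>x\<in>X. q i x * q j x)"

locale covinst =
  fixes k :: nat and X :: "nat set" and q :: "nat \<Rightarrow> nat \<Rightarrow> real"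
  assumes finX: "finite X"
    and q0: "\<And>j x. j < k \<Longrightarrow> x \<in> X \<Longrightarrow> 0 \<le> q j x"
    and qh: "\<And>j x. j < k \<Longrightarrow> x \<in> X \<Longrightarrow> q j x \<le> 1/2"
    and qs: "\<And>j. j < k \<Longrightarrow> (\<Sum>x\<in>X. q j x) = 1"
begin

lemma q1: "j < k \<Longrightarrow> x \<in> X \<Longrightarrow> q j x \<le> 1" using qh by fastforce

lemma prod_phi_bounds: "x \<in> X \<Longrightarrow> 0 \<le> (\<Prod>j\<in>A. phi (q j x) (\<theta> j)) \<and> (\<Prod>j\<in>A. phi (q j x) (\<theta> j)) \<le> 1"
  if "A \<subseteq> {..<k}"
  using that by (auto intro!: prod_nonneg prod_le_1 phi_nonneg phi_le1 q0 q1)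

lemma F_ge_half: assumes i: "i < k" shows "1/2 \<le> F k X q i \<theta>"
proof -
  have "(\<Sum>x\<in>X. q i x * (\<Prod>j<k. phi (q j x) (\<theta> j))) \<le> (\<Sum>x\<in>X. q i x)"
    using prod_phi_bounds[of "{..<k}"] q0[OF i]
    by (intro sum_mono) (simp add: mult_left_le)
  then show ?thesis unfolding F_def using qs[OF i] by simp
qed

lemma F_mono:
  assumes i: "i < k" and le: "\<And>l. l < k \<Longrightarrow> 0 \<le> \<theta> l \<and> \<theta> l \<le> \<theta>' l"
  shows "F k X q i \<theta> \<le> F k X q i \<theta>'"
proof -
  have "(\<Sum>x\<in>X. q i x * (\<Prod>j<k. phi (q j x) (\<theta>' j))) \<le> (\<Sum>x\<in>X. q i x * (\<Prod>j<k. phi (q j x) (\<theta> j)))"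
  proof (intro sum_mono mult_left_mono prod_mono conjI)
    fix x j assume x: "x \<in> X" and j: "j \<in> {..<k}"
    show "0 \<le> phi (q j x) (\<theta>' j)" using x j by (auto intro!: phi_nonneg q0 q1)
    show "phi (q j x) (\<theta>' j) \<le> phi (q j x) (\<theta> j)" using x j le by (auto intro!: phi_mono q0 q1)
  qed (use q0 i in auto)
  then show ?thesis unfolding F_def by simp
qed

lemma F_lin_upper:
  assumes i: "i < k" and nn: "\<And>l. l < k \<Longrightarrow> 0 \<le> \<theta> l"
  shows "F k X q i \<theta> \<le> 1/2 + 1/2 * (\<Sum>j<k. \<theta> j * M X q i j)"
proof -
  have pl: "1 - (\<Sum>j<k. q j x * \<theta> j) \<le> (\<Prod>j<k. phi (q j x) (\<theta> j))" if x: "x \<in> X" for x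
  proof -
    have "1 - (\<Sum>j<k. q j x * \<theta> j) \<le> 1 - (\<Sum>j<k. 1 - phi (q j x) (\<theta> j))"
      using x nn by (intro diff_left_mono sum_mono) (smt (verit) phi_ge q0 q1 lessThan_iff)
    also have "\<dots> \<le> (\<Prod>j<k. phi (q j x) (\<theta> j))"
      using x by (intro prod_ge_1_minus_sum) (auto intro!: phi_nonneg phi_le1 q0 q1)
    finally show ?thesis .
  qed
  have "(\<Sum>x\<in>X. q i x * (1 - (\<Sum>j<k. q j x * \<theta> j))) \<le> (\<Sum>x\<in>X. q i x * (\<Prod>j<k. phi (q j x) (\<theta> j)))"
    using pl q0[OF i] by (intro sum_mono mult_left_mono) auto
  moreover have "(\<Sum>x\<in>X. q i x * (1 - (\<Sum>j<k. q j x * \<theta> j))) = 1 - (\<Sum>j<k. \<theta> j * M X q i j)"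
    unfolding M_def using qs[OF i]
    by (simp add: algebra_simps sum_subtractf sum_distrib_left sum_distrib_right sum.swap[of _ X])
  ultimately show ?thesis unfolding F_def by simp
qed

definition PP :: "nat \<Rightarrow> (nat \<Rightarrow> real) \<Rightarrow> nat \<Rightarrow> real" where
  "PP j \<theta> x = (\<Prod>l\<in>{..<k}-{j}. phi (q l x) (\<theta> l))"

lemma F_affine:
  assumes j: "j < k" and t: "0 \<le> t" "t \<le> 1"
  shows "F k X q i (\<theta>(j := t)) = (1 - 1/2 * (\<Sum>x\<in>X. q i x * PP j \<theta> x)) + (1/2 * (\<Sum>x\<in>X. q i x * q j x * PP j \<theta> x)) * t"
proof -
  have eqx: "(\<Prod>l<k. phi (q l x) ((\<theta>(j := t)) l)) = (1 - q j x * t) * PP j \<theta> x" for x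
  proof -
    have "(\<Prod>l<k. phi (q l x) ((\<theta>(j := t)) l)) = phi (q j x) t * (\<Prod>l\<in>{..<k}-{j}. phi (q l x) ((\<theta>(j := t)) l))"
      using j by (subst prod.remove[of _ j]) auto
    also have "(\<Prod>l\<in>{..<k}-{j}. phi (q l x) ((\<theta>(j := t)) l)) = PP j \<theta> x"
      unfolding PP_def by (intro prod.cong) auto
    finally show ?thesis using phi_lin[OF t] by simp
  qed
  have "(\<Sum>x\<in>X. q i x * (\<Prod>l<k. phi (q l x) ((\<theta>(j := t)) l))) = (\<Sum>x\<in>X. q i x * PP j \<theta> x - t * (q i x * q j x * PP j \<theta> x))"
    by (intro sum.cong refl, subst eqx) (simp add: algebra_simps)
  also have "\<dots> = (\<Sum>x\<in>X. q i x * PP j \<theta> x) - t * (\<Sum>x\<in>X. q i x * q j x * PP j \<theta> x)"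
    by (simp add: sum_subtractf sum_distrib_left)
  finally have S: "(\<Sum>x\<in>X. q i x * (\<Prod>l<k. phi (q l x) ((\<theta>(j := t)) l))) = \<dots>" .
  show ?thesis unfolding F_def S by (simp add: algebra_simps)
qed

lemma PP_bounds: "x \<in> X \<Longrightarrow> 0 \<le> PP j \<theta> x \<and> PP j \<theta> x \<le> 1"
  unfolding PP_def by (rule prod_phi_bounds) auto

lemma PP_lower:
  assumes x: "x \<in> X" and le: "\<And>l. l < k \<Longrightarrow> 0 \<le> \<theta> l \<and> \<theta> l \<le> 1"
  shows "(1/2) ^ k \<le> PP j \<theta> x"
proof -
  have "(\<Prod>l\<in>{..<k}-{j}. (1/2::real)) \<le> PP j \<theta> x"
    unfolding PP_def
  proof (intro prod_mono conjI)
    fix l assume l: "l \<in> {..<k} - {j}"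
    have "q l x * \<theta> l \<le> 1/2 * 1" using l x le by (intro mult_mono qh q0) auto
    then show "1/2 \<le> phi (q l x) (\<theta> l)" using phi_lin[of "\<theta> l" "q l x"] l le by auto
  qed auto
  moreover have "(1/2::real) ^ k \<le> (\<Prod>l\<in>{..<k}-{j}. (1/2::real))"
    by (subst prod_constant, intro power_decreasing)
      (auto intro: order.trans[OF card_mono[of "{..<k}"]])
  ultimately show ?thesis by linarith
qed

lemma sumsq_pos: "i < k \<Longrightarrow> 0 < (\<Sum>x\<in>X. q i x * q i x)"
proof -
  assume i: "i < k"
  have "\<exists>x\<in>X. q i x \<noteq> 0"
  proof (rule ccontr)
    assume "\<not> ?thesis" then have "(\<Sum>x\<in>X. q i x) = 0" by simp
    then show False using qs[OF i] by simp
  qed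
  then obtain x where x: "x \<in> X" "q i x \<noteq> 0" by blast
  have "0 < q i x" using x q0[OF i] by (simp add: order_less_le)
  then show ?thesis using x finX by (intro sum_pos2[of X x]) auto
qed

lemma B_bounds:
  assumes i: "i < k" and j: "j < k"
  shows "0 \<le> 1/2 * (\<Sum>x\<in>X. q i x * q j x * PP j \<theta> x) \<and> 1/2 * (\<Sum>x\<in>X. q i x * q j x * PP j \<theta> x) \<le> 1"
proof -
  have "(\<Sum>x\<in>X. q i x * q j x * PP j \<theta> x) \<le> (\<Sum>x\<in>X. q i x)"
    using PP_bounds q0 q1 i j by (intro sum_mono) (simp add: mult_le_one mult_left_le mult.assoc)
  moreover have "0 \<le> (\<Sum>x\<in>X. q i x * q j x * PP j \<theta> x)"
    using PP_bounds q0 i j by (intro sum_nonneg) simp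
  ultimately show ?thesis using qs[OF i] by simp
qed

lemma B_lower:
  assumes i: "i < k" and le: "\<And>l. l < k \<Longrightarrow> 0 \<le> \<theta> l \<and> \<theta> l \<le> 1"
  shows "1/2 * ((1/2)^k * (\<Sum>x\<in>X. q i x * q i x)) \<le> 1/2 * (\<Sum>x\<in>X. q i x * q i x * PP i \<theta> x)"
proof -
  have "(1/2)^k * (\<Sum>x\<in>X. q i x * q i x) \<le> (\<Sum>x\<in>X. q i x * q i x * PP i \<theta> x)"
    unfolding sum_distrib_left
  proof (intro sum_mono)
    fix x assume x: "x \<in> X"
    have "(1/2)^k \<le> PP i \<theta> x" by (rule PP_lower[OF x le])
    then have "(1/2)^k * (q i x * q i x) \<le> PP i \<theta> x * (q i x * q i x)"
      by (rule mult_right_mono) simp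
    then show "(1/2)^k * (q i x * q i x) \<le> q i x * q i x * PP i \<theta> x"
      by (simp add: ac_simps)
  qed
  then show ?thesis by simp
qed

lemma F_alone:
  assumes i: "i < k" and j: "j < k" and a: "0 \<le> a" "a \<le> 1"
  shows "F k X q i (alone j a) = 1/2 + 1/2 * a * M X q i j"
proof -
  have eqx: "(\<Prod>l<k. phi (q l x) (alone j a l)) = 1 - q j x * a" for x
  proof -
    have "(\<Prod>l<k. phi (q l x) (alone j a l)) = phi (q j x) a * (\<Prod>l\<in>{..<k}-{j}. phi (q l x) (alone j a l))"
      using j by (subst prod.remove[of _ j]) (auto simp: alone_def)
    also have "(\<Prod>l\<in>{..<k}-{j}. phi (q l x) (alone j a l)) = 1"
      by (intro prod.neutral) (auto simp: alone_def)
    finally show ?thesis using phi_lin[OF a] by simp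
  qed
  have "(\<Sum>x\<in>X. q i x * (\<Prod>l<k. phi (q l x) (alone j a l))) = (\<Sum>x\<in>X. q i x - a * (q i x * q j x))"
    by (intro sum.cong refl, subst eqx) (simp add: algebra_simps)
  also have "\<dots> = 1 - a * (\<Sum>x\<in>X. q i x * q j x)"
    using qs[OF i] by (simp add: sum_subtractf sum_distrib_left)
  finally have S: "(\<Sum>x\<in>X. q i x * (\<Prod>l<k. phi (q l x) (alone j a l))) = \<dots>" .
  show ?thesis unfolding F_def M_def S by (simp add: algebra_simps)
qed

end

context covinst begin

lemma g_deriv:
  assumes j: "j < k" and s: "0 \<le> s" "s \<le> 1" and S: "S = {s..} \<and> s < 1 \<or> S = {..s} \<and> 0 < s"
  shows "((\<lambda>t. F k X q i (\<theta>(j := t))) has_real_derivative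
           (1/2 * (\<Sum>x\<in>X. q i x * q j x * PP j \<theta> x))) (at s within S)"
proof -
  define A where "A = 1 - 1/2 * (\<Sum>x\<in>X. q i x * PP j \<theta> x)"
  define B where "B = 1/2 * (\<Sum>x\<in>X. q i x * q j x * PP j \<theta> x)"
  have aff: "F k X q i (\<theta>(j := t)) = A + B * t" if "0 \<le> t" "t \<le> 1" for t
    unfolding A_def B_def using F_affine[OF j that] by simp
  have d0: "((\<lambda>t. A + B * t) has_real_derivative B) (at s within S)"
    by (auto intro!: derivative_eq_intros)
  obtain d where d: "0 < d" "\<And>x. x \<in> S \<Longrightarrow> dist x s < d \<Longrightarrow> 0 \<le> x \<and> x \<le> 1"
  proof (cases "S = {s..} \<and> s < 1")
    case True
    show ?thesis by (rule that[of "1 - s"]) (use True s in \<open>auto simp: dist_real_def\<close>)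
  next
    case False
    then have "S = {..s}" "0 < s" using S by auto
    show ?thesis by (rule that[of s]) (use \<open>S = {..s}\<close> \<open>0 < s\<close> s in \<open>auto simp: dist_real_def\<close>)
  qed
  have sS: "s \<in> S" using S by auto
  show ?thesis unfolding B_def[symmetric]
    by (rule has_field_derivative_transform_within[OF d0 d(1) sS]) (use aff d(2) in auto)
qed

definition cc2 :: "nat \<Rightarrow> real" where "cc2 i = 1/2 * ((1/2)^k * (\<Sum>x\<in>X. q i x * q i x))"

lemma wb_inner:
  assumes vt: "\<forall>l<k. 0 \<le> vt l \<and> vt l \<le> 1"
    and i: "i < k" and th: "\<theta> \<in> box k vt" and j: "j < k"
  shows "(\<theta> j < vt j \<longrightarrow> (\<exists>D. ((\<lambda>t. F k X q i (\<theta>(j := t))) has_real_derivative D) (at (\<theta> j) within {\<theta> j..}) \<and>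
           (if j = i then cc2 i \<le> D else 0 \<le> D \<and> D \<le> 1))) \<and>
         (0 < \<theta> j \<longrightarrow> (\<exists>D. ((\<lambda>t. F k X q i (\<theta>(j := t))) has_real_derivative D) (at (\<theta> j) within {..\<theta> j}) \<and>
           (if j = i then cc2 i \<le> D else 0 \<le> D \<and> D \<le> 1)))"
proof -
  have le: "\<And>l. l < k \<Longrightarrow> 0 \<le> \<theta> l \<and> \<theta> l \<le> 1"
    using th vt unfolding box_def by force
  define D where "D = 1/2 * (\<Sum>x\<in>X. q i x * q j x * PP j \<theta> x)"
  have okD: "if j = i then cc2 i \<le> D else 0 \<le> D \<and> D \<le> 1"
    using B_bounds[OF i j, of \<theta>] B_lower[of i \<theta>, OF i le] unfolding D_def cc2_def by auto
  have s: "0 \<le> \<theta> j" "\<theta> j \<le> 1" using le j by auto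
  have vtj: "vt j \<le> 1" using vt j by auto
  have R: "((\<lambda>t. F k X q i (\<theta>(j := t))) has_real_derivative D) (at (\<theta> j) within {\<theta> j..})"
    if "\<theta> j < vt j"
    unfolding D_def by (rule g_deriv[OF j s]) (use that vtj in auto)
  have L: "((\<lambda>t. F k X q i (\<theta>(j := t))) has_real_derivative D) (at (\<theta> j) within {..\<theta> j})"
    if "0 < \<theta> j"
    unfolding D_def by (rule g_deriv[OF j s]) (use that in auto)
  show ?thesis using R L okD by blast
qed

lemma wb: assumes vt: "\<And>l. l < k \<Longrightarrow> 0 \<le> vt l \<and> vt l \<le> 1"
  shows "well_behaved k (F k X q) vt"
  unfolding well_behaved_def Let_def
proof (intro allI impI)
  fix i assume i: "i < k"
  have c2: "0 < cc2 i" unfolding cc2_def using sumsq_pos[OF i] by simp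
  have vt': "\<forall>l<k. 0 \<le> vt l \<and> vt l \<le> 1" using vt by blast
  note W = wb_inner[OF vt' i]
  show "\<exists>c1 c2. 0 \<le> c1 \<and> 0 < c2 \<and>
        (\<forall>\<theta>\<in>box k vt. \<forall>j<k.
            (\<theta> j < vt j \<longrightarrow> (\<exists>D. ((\<lambda>t. F k X q i (\<theta>(j := t))) has_real_derivative D) (at (\<theta> j) within {\<theta> j..}) \<and> (if j = i then c2 \<le> D else 0 \<le> D \<and> D \<le> c1))) \<and>
            (0 < \<theta> j \<longrightarrow> (\<exists>D. ((\<lambda>t. F k X q i (\<theta>(j := t))) has_real_derivative D) (at (\<theta> j) within {..\<theta> j}) \<and> (if j = i then c2 \<le> D else 0 \<le> D \<and> D \<le> c1))))"
    apply (rule exI[of _ 1], rule exI[of _ "cc2 i"])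
    apply (intro conjI ballI allI impI)
       apply simp
      apply (rule c2)
     subgoal for \<theta> j using W[of \<theta> j] by blast
    subgoal for \<theta> j using W[of \<theta> j] by blast
    done
qed

lemma F_strict:
  assumes j: "j < k" and le: "\<And>l. l < k \<Longrightarrow> 0 \<le> \<theta> l \<and> \<theta> l \<le> 1" and x: "0 \<le> x" "x < \<theta> j"
  shows "F k X q j (\<theta>(j := x)) < F k X q j \<theta>"
proof -
  define B where "B = 1/2 * (\<Sum>x\<in>X. q j x * q j x * PP j \<theta> x)"
  have "0 < 1/2 * ((1/2)^k * (\<Sum>x\<in>X. q j x * q j x))" using sumsq_pos[OF j] by simp
  then have B: "0 < B" using B_lower[of j \<theta>, OF j le] unfolding B_def by linarith
  have t: "0 \<le> \<theta> j" "\<theta> j \<le> 1" using le j by auto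
  have "F k X q j (\<theta>(j := x)) = (1 - 1/2 * (\<Sum>x\<in>X. q j x * PP j \<theta> x)) + B * x"
    using F_affine[OF j x(1)] x t unfolding B_def by simp
  moreover have "F k X q j \<theta> = (1 - 1/2 * (\<Sum>x\<in>X. q j x * PP j \<theta> x)) + B * \<theta> j"
    using F_affine[OF j t, of j \<theta>] unfolding B_def by simp
  ultimately show ?thesis using B x by simp
qed

end

definition SS :: "nat \<Rightarrow> nat \<Rightarrow> nat set" where
  "SS m j = (if j = 0 then {..<m} else insert ((j-1) div m) {m*j+1 ..< m*j+m})"

lemma div_char: "0 < (m::nat) \<Longrightarrow> (a div m = x) = (x*m \<le> a \<and> a < x*m + m)"
  by (smt (verit) Euclidean_Rings.div_eq_0_iff add_left_imp_eq
    div_mult_self3 less_eq_div_iff_mult_less_eq nat_add_left_cancel_less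
    nat_arith.rule0 nat_le_iff_add neq0_conv)

lemma g_less: "2 \<le> m \<Longrightarrow> j \<in> {1..<m*m+1} \<Longrightarrow> (j-1) div m < (m::nat)"
proof -
  assume "2 \<le> m" "j \<in> {1..<m*m+1}"
  then have "j - 1 < m * m" by auto
  then show ?thesis by (simp add: less_mult_imp_div_less)
qed

lemma cnt_a:
  assumes m: "2 \<le> m" and x: "x < m"
  shows "{j \<in> {1..<m*m+1}. x \<in> SS m j} = {x*m+1..<x*m+m+1}"
proof (intro set_eqI iffI)
  fix j assume "j \<in> {j \<in> {1..<m*m+1}. x \<in> SS m j}"
  then have j: "1 \<le> j" "j < m*m+1" and xs: "x \<in> SS m j" by auto
  have "m \<le> m * j" using j by simp
  then have "x < m*j+1" using x by linarith
  then have "x \<notin> {m*j+1 ..< m*j+m}" by simp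
  then have "(j-1) div m = x" using xs j unfolding SS_def by auto
  then have "x*m \<le> j-1 \<and> j-1 < x*m + m" using div_char[of m "j-1" x] m by simp
  then show "j \<in> {x*m+1..<x*m+m+1}" using j by auto
next
  fix j assume j: "j \<in> {x*m+1..<x*m+m+1}"
  have "(x+1)*m \<le> m*m" using x by (intro mult_le_mono1) simp
  then have jk: "j < m*m+1" using j by (simp add: algebra_simps)
  have "(j-1) div m = x" using div_char[of m "j-1" x] m j by auto
  then show "j \<in> {j \<in> {1..<m*m+1}. x \<in> SS m j}" using j jk unfolding SS_def by auto
qed

lemma cnt_b:
  assumes m: "2 \<le> m" and l: "l \<in> {1..<m*m+1}" and xl: "x \<in> SS m l" and xm: "m \<le> x"
  shows "{j \<in> {1..<m*m+1}. x \<in> SS m j} = {l}"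
proof -
  have key: "x div m = j" if j: "j \<in> {1..<m*m+1}" and xj: "x \<in> SS m j" for j
  proof -
    have "(j-1) div m < m" using g_less[OF m j] .
    then have "x \<noteq> (j-1) div m" using xm by auto
    then have "m*j+1 \<le> x \<and> x < m*j+m" using xj j unfolding SS_def by auto
    then show ?thesis using div_char[of m x j] m by (simp add: mult.commute)
  qed
  show ?thesis
  proof (intro set_eqI iffI)
    fix j assume "j \<in> {j \<in> {1..<m*m+1}. x \<in> SS m j}"
    then show "j \<in> {l}" using key[of j] key[OF l xl] by auto
  qed (use l xl in auto)
qed

lemma sumif: "finite A \<Longrightarrow> S \<subseteq> A \<Longrightarrow> (\<Sum>x\<in>A. if x \<in> S then f x else 0) = (\<Sum>x\<in>S. f x)"
proof -
  assume "finite A" "S \<subseteq> A"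
  then have "(\<Sum>x\<in>A. if x \<in> S then f x else 0) = (\<Sum>x\<in>{x\<in>A. x \<in> S}. f x)"
    by (simp add: sum.inter_filter)
  also have "{x\<in>A. x \<in> S} = S" using \<open>S \<subseteq> A\<close> by auto
  finally show ?thesis .
qed

definition JJ :: "nat \<Rightarrow> nat set" where "JJ m = {1..<m*m+1}"

definition XX :: "nat \<Rightarrow> nat set" where "XX m = {..< m*(m*m+1)}"
definition qq :: "nat \<Rightarrow> nat \<Rightarrow> nat \<Rightarrow> real" where "qq m = uniform_q (SS m)"

lemma bad_pricesI:
  assumes so: "socially_optimal k \<Theta> u \<mu> \<theta>o" and st: "stable_eq k \<Theta> u \<mu> \<theta>s"
    and ef: "envy_free k \<Theta> u \<mu> \<theta>e"
    and lbs: "\<And>\<theta>. stable_eq k \<Theta> u \<mu> \<theta> \<Longrightarrow> L \<le> cost k \<theta>"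
    and lbe: "\<And>\<theta>. envy_free k \<Theta> u \<mu> \<theta> \<Longrightarrow> L \<le> cost k \<theta>"
    and pos: "0 < cost k \<theta>o" and r: "r \<le> L / cost k \<theta>o"
  shows "bad_prices k \<Theta> u \<mu> r"
proof -
  have oc: "opt_cost k \<Theta> u \<mu> = cost k \<theta>o"
    unfolding opt_cost_def using so unfolding socially_optimal_def
    by (intro cInf_eq_minimum) auto
  have "L \<le> Inf (cost k ` {\<theta>. stable_eq k \<Theta> u \<mu> \<theta>})"
    using st lbs by (intro cInf_greatest) auto
  then have "L / cost k \<theta>o \<le> price_of_stability k \<Theta> u \<mu>"
    unfolding price_of_stability_def oc using pos by (intro divide_right_mono) auto
  moreover have "L \<le> Inf (cost k ` {\<theta>. envy_free k \<Theta> u \<mu> \<theta>})"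
    using ef lbe by (intro cInf_greatest) auto
  then have "L / cost k \<theta>o \<le> price_of_fairness k \<Theta> u \<mu>"
    unfolding price_of_fairness_def oc using pos by (intro divide_right_mono) auto
  ultimately show ?thesis unfolding bad_prices_def using so st ef r by auto
qed

definition tt :: "nat \<Rightarrow> real" where "tt m = 1 / (2 * real m)"
definition thS :: "nat \<Rightarrow> nat \<Rightarrow> real" where "thS m = (\<lambda>l. if 1 \<le> l \<and> l < m*m+1 then tt m else 0)"
definition muv :: "nat \<Rightarrow> real" where
  "muv m = 1 - 1/2 * ((1 / real m) * (1 - tt m / m) ^ m + ((real m - 1) / real m) * (1 - tt m / m))"
definition rr :: "nat \<Rightarrow> real" where "rr m = 2 * muv m - 1"

definition uu :: "nat \<Rightarrow> nat \<Rightarrow> (nat \<Rightarrow> real) \<Rightarrow> real" where "uu m = F (m*m+1) (XX m) (qq m)"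
definition mu :: "nat \<Rightarrow> nat \<Rightarrow> real" where "mu m = (\<lambda>i. if i = 0 then 1/2 else muv m)"

definition vtt :: "nat \<Rightarrow> nat \<Rightarrow> real" where
  "vtt m = (\<lambda>i. if i \<in> JJ m then rr m / M (XX m) (qq m) i i else 0)"
definition thO :: "nat \<Rightarrow> nat \<Rightarrow> real" where "thO m = alone 0 (real (m*m) * rr m)"
definition thE :: "nat \<Rightarrow> nat \<Rightarrow> real" where "thE m = (\<lambda>l. if l < m*m+1 then 1 else 0)"

context fixes m :: nat assumes m2: "2 \<le> m"
begin

lemma SS_props:
  assumes j: "j < m*m+1"
  shows "finite (SS m j) \<and> SS m j \<noteq> {} \<and> card (SS m j) = m \<and> SS m j \<subseteq> XX m"
proof (cases "j = 0")
  case True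
  have "m \<le> m*(m*m+1)" by simp
  moreover have "{..<m} \<noteq> {}" using m2 by (metis lessThan_empty_iff not_numeral_le_zero)
  ultimately show ?thesis using True m2 unfolding SS_def XX_def by auto
next
  case False
  have gl: "(j-1) div m < m" using g_less[OF m2, of j] j False by auto
  have "m \<le> m*j" using False by simp
  then have "(j-1) div m < m*j+1" using gl by linarith
  then have gn: "(j-1) div m \<notin> {m*j+1 ..< m*j+m}" by simp
  have "m*j+m \<le> m*(m*m+1)" using j
    by (metis Suc_eq_plus1 Suc_leI add_mult_distrib2 mult.commute mult_le_mono2 nat_mult_1_right) 
  note bnd = this
  have mm: "m \<le> m*(m*m+1)" by simp
  have sub: "SS m j \<subseteq> XX m"
  proof
    fix x assume "x \<in> SS m j"
    then have "x = (j-1) div m \<or> x < m*j+m" using False unfolding SS_def by auto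
    then have "x < m*(m*m+1)" using gl bnd mm by linarith
    then show "x \<in> XX m" unfolding XX_def by simp
  qed
  have "card (SS m j) = m" using False gn m2 unfolding SS_def by simp
  then show ?thesis using sub False unfolding SS_def by simp
qed

lemma q_eq: "j < m*m+1 \<Longrightarrow> qq m j x = (if x \<in> SS m j then 1/m else 0)"
  using SS_props[of j] unfolding qq_def uniform_q_def by (simp add: indicator_def)

lemma ci: "covinst (m*m+1) (XX m) (qq m)"
proof
  show "finite (XX m)" unfolding XX_def by simp
  fix j x assume "j < m*m+1" "x \<in> XX m"
  then show "0 \<le> qq m j x" by (simp add: q_eq)
  have "1/real m \<le> 1/2" using m2 by (simp add: divide_simps)
  then show "qq m j x \<le> 1/2" using \<open>j < m*m+1\<close> by (simp add: q_eq)
next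
  fix j assume j: "j < m*m+1"
  have "(\<Sum>x\<in>XX m. qq m j x) = (\<Sum>x\<in>SS m j. 1/real m)"
    using SS_props[OF j] j by (simp add: q_eq sumif XX_def)
  also have "\<dots> = 1" using SS_props[OF j] m2 by simp
  finally show "(\<Sum>x\<in>XX m. qq m j x) = 1" .
qed

lemma cnt_a': "x < m \<Longrightarrow> {j\<in>JJ m. x \<in> SS m j} = {x*m+1..<x*m+m+1}"
  unfolding JJ_def by (rule cnt_a[OF m2])

lemma cnt_b': "l \<in> JJ m \<Longrightarrow> x \<in> SS m l \<Longrightarrow> m \<le> x \<Longrightarrow> {j\<in>JJ m. x \<in> SS m j} = {l}"
  unfolding JJ_def by (rule cnt_b[OF m2])

lemma JJ_lt: "j \<in> JJ m \<Longrightarrow> j < m*m+1 \<and> 1 \<le> j" unfolding JJ_def by auto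

lemma cov: "(\<Sum>j\<in>JJ m. qq m j x) = card {j\<in>JJ m. x \<in> SS m j} / m"
proof -
  have "(\<Sum>j\<in>JJ m. qq m j x) = (\<Sum>j\<in>JJ m. if x \<in> SS m j then 1/real m else 0)"
    by (intro sum.cong refl) (simp add: q_eq[OF JJ_lt[THEN conjunct1]])
  also have "\<dots> = (\<Sum>j\<in>{j\<in>JJ m. x \<in> SS m j}. 1/real m)"
    by (rule sum.inter_filter[symmetric]) (simp add: JJ_def)
  also have "\<dots> = card {j\<in>JJ m. x \<in> SS m j} / m" by (simp only: sum_constant) simp
  finally show ?thesis .
qed

lemma cov_a: "x < m \<Longrightarrow> (\<Sum>j\<in>JJ m. qq m j x) = 1"
  using m2 by (simp add: cov cnt_a')

lemma cov_b: "l \<in> JJ m \<Longrightarrow> x \<in> SS m l \<Longrightarrow> m \<le> x \<Longrightarrow> (\<Sum>j\<in>JJ m. qq m j x) = 1/m"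
  by (simp add: cov cnt_b')

lemma SS_split: assumes l: "l \<in> JJ m"
  shows "SS m l = insert ((l-1) div m) {m*l+1 ..< m*l+m} \<and> (l-1) div m < m \<and>
    (\<forall>x\<in>{m*l+1 ..< m*l+m}. m \<le> x) \<and> card {m*l+1 ..< m*l+m} = m - 1 \<and>
    (l-1) div m \<notin> {m*l+1 ..< m*l+m}"
proof -
  have gl: "(l-1) div m < m" using g_less[OF m2] l unfolding JJ_def by blast
  have ml: "m \<le> m*l" using l unfolding JJ_def by simp
  have l0: "l \<noteq> 0" using l unfolding JJ_def by simp
  have a: "\<forall>x\<in>{m*l+1 ..< m*l+m}. m \<le> x"
  proof
    fix x assume "x \<in> {m*l+1 ..< m*l+m}"
    then have "m*l+1 \<le> x" by simp
    then show "m \<le> x" using ml by linarith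
  qed
  have "(l-1) div m < m*l+1" using ml gl by linarith
  then have b: "(l-1) div m \<notin> {m*l+1 ..< m*l+m}" by simp
  show ?thesis using a b gl l0 unfolding SS_def by auto
qed

lemma colsum: assumes l: "l < m*m+1"
  shows "(\<Sum>j\<in>JJ m. M (XX m) (qq m) j l) = (if l = 0 then 1 else (2 * real m - 1) / (real m)^2)"
proof -
  have "(\<Sum>j\<in>JJ m. M (XX m) (qq m) j l) = (\<Sum>x\<in>XX m. qq m l x * (\<Sum>j\<in>JJ m. qq m j x))"
    unfolding M_def by (subst sum.swap) (simp add: sum_distrib_left mult.commute)
  also have "\<dots> = (\<Sum>x\<in>XX m. if x \<in> SS m l then 1/real m * (\<Sum>j\<in>JJ m. qq m j x) else 0)"
    using l by (intro sum.cong refl) (simp add: q_eq)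
  also have "\<dots> = (\<Sum>x\<in>SS m l. 1/real m * (\<Sum>j\<in>JJ m. qq m j x))"
    using SS_props[OF l] by (intro sumif) (auto simp: XX_def)
  also have "\<dots> = (if l = 0 then 1 else (2 * real m - 1) / (real m)^2)"
  proof (cases "l = 0")
    case True
    have "(\<Sum>x\<in>SS m l. 1/real m * (\<Sum>j\<in>JJ m. qq m j x)) = (\<Sum>x\<in>{..<m}. 1/real m)"
      using True unfolding SS_def by (intro sum.cong refl) (use cov_a in auto)
    then show ?thesis using True m2 by simp
  next
    case False
    then have l': "l \<in> JJ m" using l unfolding JJ_def by auto
    note sp = SS_split[OF l']
    have "(\<Sum>x\<in>SS m l. 1/real m * (\<Sum>j\<in>JJ m. qq m j x))
        = 1/real m * 1 + (\<Sum>x\<in>{m*l+1 ..< m*l+m}. 1/real m * (1 / real m))"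
    proof -
      have "(\<Sum>x\<in>{m*l+1 ..< m*l+m}. 1/real m * (\<Sum>j\<in>JJ m. qq m j x)) = (\<Sum>x\<in>{m*l+1 ..< m*l+m}. 1/real m * (1 / real m))"
        using sp l' by (intro sum.cong refl) (subst cov_b[OF l'], auto)
      moreover have "(\<Sum>x\<in>SS m l. 1/real m * (\<Sum>j\<in>JJ m. qq m j x)) =
          1/real m * (\<Sum>j\<in>JJ m. qq m j ((l-1) div m)) + (\<Sum>x\<in>{m*l+1 ..< m*l+m}. 1/real m * (\<Sum>j\<in>JJ m. qq m j x))"
        using sp by (simp only:) (rule sum.insert, auto)
      moreover have "(\<Sum>j\<in>JJ m. qq m j ((l-1) div m)) = 1" using sp cov_a by blast
      ultimately show ?thesis by simp
    qed
    also have "\<dots> = (2 * real m - 1) / (real m)^2"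
      using sp m2 by (simp add: of_nat_diff field_simps power2_eq_square)
    finally show ?thesis using False by simp
  qed
  finally show ?thesis .
qed


lemma tt_bounds: "0 \<le> tt m \<and> tt m \<le> 1"
  using m2 unfolding tt_def by (simp add: divide_simps)

lemma prod_stab: "(\<Prod>l<m*m+1. phi (qq m l x) (thS m l)) = (1 - tt m / m) ^ card {j\<in>JJ m. x \<in> SS m j}"
proof -
  have "(\<Prod>l<m*m+1. phi (qq m l x) (thS m l)) = (\<Prod>l<m*m+1. if l \<in> JJ m \<and> x \<in> SS m l then 1 - tt m / m else 1)"
  proof (intro prod.cong refl)
    fix l assume l: "l \<in> {..<m*m+1}"
    have "0 \<le> thS m l" "thS m l \<le> 1" using tt_bounds unfolding thS_def by auto
    then have "phi (qq m l x) (thS m l) = 1 - qq m l x * thS m l" by (rule phi_lin)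
    then show "phi (qq m l x) (thS m l) = (if l \<in> JJ m \<and> x \<in> SS m l then 1 - tt m / m else 1)"
      using l by (auto simp: q_eq thS_def JJ_def)
  qed
  also have "\<dots> = (1 - tt m / m) ^ card ({..<m*m+1} \<inter> {l. l \<in> JJ m \<and> x \<in> SS m l})"
    by (subst prod.If_cases) auto
  also have "{..<m*m+1} \<inter> {l. l \<in> JJ m \<and> x \<in> SS m l} = {j\<in>JJ m. x \<in> SS m j}"
    unfolding JJ_def by auto
  finally show ?thesis .
qed

lemma F_stab: assumes j: "j \<in> JJ m" shows "F (m*m+1) (XX m) (qq m) j (thS m) = muv m"
proof -
  note sp = SS_split[OF j]
  have jk: "j < m*m+1" using j JJ_lt by blast
  define c where "c = 1 - tt m / m"
  have "(\<Sum>x\<in>XX m. qq m j x * (\<Prod>l<m*m+1. phi (qq m l x) (thS m l)))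
      = (\<Sum>x\<in>XX m. if x \<in> SS m j then 1 / real m * c ^ card {i\<in>JJ m. x \<in> SS m i} else 0)"
    using jk by (intro sum.cong refl, subst prod_stab) (simp add: q_eq c_def)
  also have "\<dots> = (\<Sum>x\<in>SS m j. 1 / real m * c ^ card {i\<in>JJ m. x \<in> SS m i})"
    using SS_props[OF jk] by (intro sumif) (auto simp: XX_def)
  also have "\<dots> = 1 / real m * c ^ card {i\<in>JJ m. (j-1) div m \<in> SS m i} + (\<Sum>x\<in>{m*j+1 ..< m*j+m}. 1 / real m * c ^ card {i\<in>JJ m. x \<in> SS m i})"
    using sp by (simp only:) (rule sum.insert, auto)
  also have "card {i\<in>JJ m. (j-1) div m \<in> SS m i} = m"
    using sp by (simp add: cnt_a')
  also have "(\<Sum>x\<in>{m*j+1 ..< m*j+m}. 1 / real m * c ^ card {i\<in>JJ m. x \<in> SS m i}) = (\<Sum>x\<in>{m*j+1 ..< m*j+m}. 1 / real m * c)"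
  proof (intro sum.cong refl)
    fix x assume x: "x \<in> {m*j+1 ..< m*j+m}"
    then have "x \<in> SS m j" "m \<le> x" using sp by auto
    then show "1 / real m * c ^ card {i\<in>JJ m. x \<in> SS m i} = 1 / real m * c"
      using cnt_b'[OF j] by simp
  qed
  also have "\<dots> = (real m - 1) / real m * c"
    using sp m2 by (simp add: of_nat_diff)
  finally show ?thesis unfolding F_def muv_def c_def by simp
qed

lemma rr_bounds: "0 < rr m \<and> rr m \<le> 1 / (real m)^2"
proof -
  define a where "a = tt m / m"
  have a: "a = 1 / (2 * (real m)^2)" unfolding a_def tt_def by (simp add: power2_eq_square)
  have "1 \<le> (real m)^2" using m2 by (intro one_le_power) simp
  then have "1 < 2 * (real m)^2" by linarith
  then have a0: "0 < a" "a < 1" unfolding a using m2 by (auto simp: divide_simps)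
  have rr: "rr m = 1 - ((1 / real m) * (1 - a) ^ m + ((real m - 1) / real m) * (1 - a))"
    unfolding rr_def muv_def a_def by (simp add: field_simps)
  have m0: "1 \<le> real m" using m2 by simp
  have b: "1 - real m * a \<le> (1 - a) ^ m"
    using Bernoulli_inequality[of "-a" m] a0 by simp
  have p1: "(1 - a) ^ m < 1" using a0 m2 by (subst power_less_one_iff) auto
  have "(1 / real m) * (1 - a) ^ m \<le> 1 / real m * 1" using p1 m0 by (intro mult_left_mono) auto
  moreover have "((real m - 1) / real m) * (1 - a) < ((real m - 1) / real m) * 1"
    using a0 m2 by (intro mult_strict_left_mono) auto
  moreover have "1 / real m * 1 + ((real m - 1) / real m) * 1 = 1" using m0 by (simp add: field_simps)
  ultimately have pos: "0 < rr m" unfolding rr by linarith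
  have "(1 / real m) * (1 - real m * a) \<le> (1 / real m) * (1 - a) ^ m"
    using b m0 by (intro mult_left_mono) auto
  then have "rr m \<le> 1 - ((1 / real m) * (1 - real m * a) + ((real m - 1) / real m) * (1 - a))"
    unfolding rr by simp
  also have "\<dots> = a + (real m - 1) / real m * a" using m0 by (simp add: field_simps)
  also have "\<dots> \<le> a + 1 * a" using a0 m0 by (intro add_left_mono mult_right_mono) auto
  also have "\<dots> = 1 / (real m)^2" unfolding a by simp
  finally show ?thesis using pos by simp
qed


lemma muv_eq: "muv m = 1/2 + rr m / 2" by (simp add: rr_def field_simps)

lemma split0: "(\<Sum>l<m*m+1. f l) = f 0 + (\<Sum>l\<in>JJ m. f l)"
proof -
  have "{..<m*m+1} = insert 0 (JJ m)" by (auto simp: JJ_def)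
  moreover have "0 \<notin> JJ m" by (simp add: JJ_def)
  ultimately show ?thesis by (simp add: JJ_def)
qed

lemma cardJ: "card (JJ m) = m*m" by (simp add: JJ_def)

lemma cost_split: "cost (m*m+1) \<theta> = \<theta> 0 + (\<Sum>l\<in>JJ m. \<theta> l)"
  unfolding cost_def by (rule split0)

lemma orth_nn: "\<theta> \<in> nonneg_orthant k \<Longrightarrow> l < k \<Longrightarrow> 0 \<le> \<theta> l"
  unfolding nonneg_orthant_def by auto

lemma LP:
  assumes th: "\<theta> \<in> nonneg_orthant (m*m+1)" and fe: "\<And>j. j \<in> JJ m \<Longrightarrow> muv m \<le> uu m j \<theta>"
  shows "real (m*m) * rr m \<le> \<theta> 0 + (2 * real m - 1) / (real m)^2 * (\<Sum>l\<in>JJ m. \<theta> l)"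
proof -
  have nn: "\<And>l. l < m*m+1 \<Longrightarrow> 0 \<le> \<theta> l" using orth_nn[OF th] .
  have each: "rr m \<le> (\<Sum>l<m*m+1. \<theta> l * M (XX m) (qq m) j l)" if j: "j \<in> JJ m" for j
  proof -
    have jk: "j < m*m+1" using JJ_lt[OF j] by simp
    have "F (m*m+1) (XX m) (qq m) j \<theta> \<le> 1/2 + 1/2 * (\<Sum>l<m*m+1. \<theta> l * M (XX m) (qq m) j l)"
      by (rule covinst.F_lin_upper[OF ci jk]) (simp add: nn)
    then have "muv m \<le> 1/2 + 1/2 * (\<Sum>l<m*m+1. \<theta> l * M (XX m) (qq m) j l)"
      using fe[OF j] unfolding uu_def by linarith
    then show ?thesis unfolding muv_eq by linarith
  qed
  have "real (m*m) * rr m = (\<Sum>j\<in>JJ m. rr m)" by (simp add: cardJ)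
  also have "\<dots> \<le> (\<Sum>j\<in>JJ m. \<Sum>l<m*m+1. \<theta> l * M (XX m) (qq m) j l)"
    by (intro sum_mono each)
  also have "\<dots> = (\<Sum>l<m*m+1. \<theta> l * (\<Sum>j\<in>JJ m. M (XX m) (qq m) j l))"
    by (subst sum.swap) (simp add: sum_distrib_left)
  also have "\<dots> = (\<Sum>l<m*m+1. \<theta> l * (if l = 0 then 1 else (2 * real m - 1) / (real m)^2))"
    by (intro sum.cong refl) (simp add: colsum)
  also have "\<dots> = \<theta> 0 + (\<Sum>l\<in>JJ m. \<theta> l * ((2 * real m - 1) / (real m)^2))"
    by (subst split0) (simp add: JJ_def)
  also have "\<dots> = \<theta> 0 + (2 * real m - 1) / (real m)^2 * (\<Sum>l\<in>JJ m. \<theta> l)"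
    by (subst sum_distrib_left) (simp add: mult.commute)
  finally show ?thesis .
qed

lemma key_lb:
  assumes th: "\<theta> \<in> nonneg_orthant (m*m+1)" and fe: "\<And>j. j \<in> JJ m \<Longrightarrow> muv m \<le> uu m j \<theta>"
    and c: "\<theta> 0 = 0 \<or> (\<forall>l\<in>JJ m. \<theta> 0 \<le> \<theta> l)"
  shows "real m ^ 3 * rr m / 2 \<le> cost (m*m+1) \<theta>"
proof -
  define T where "T = (\<Sum>l\<in>JJ m. \<theta> l)"
  have nn: "\<And>l. l < m*m+1 \<Longrightarrow> 0 \<le> \<theta> l" using orth_nn[OF th] .
  have T0: "0 \<le> T" unfolding T_def using nn JJ_lt by (intro sum_nonneg) blast
  have m0: "(1::real) \<le> real m" using m2 by simp
  have lp: "real (m*m) * rr m \<le> \<theta> 0 + (2 * real m - 1) / (real m)^2 * T"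
    using LP[OF th fe] unfolding T_def .
  have b: "\<theta> 0 + (2 * real m - 1) / (real m)^2 * T \<le> 2 / real m * T"
  proof (cases "\<theta> 0 = 0")
    case True
    have "(2 * real m - 1) / (real m)^2 \<le> 2 / real m" using m0 by (simp add: field_simps power2_eq_square)
    then have "(2 * real m - 1) / (real m)^2 * T \<le> 2 / real m * T" by (rule mult_right_mono[OF _ T0])
    then show ?thesis using True by simp
  next
    case False
    then have le: "\<forall>l\<in>JJ m. \<theta> 0 \<le> \<theta> l" using c by auto
    have "(\<Sum>l\<in>JJ m. \<theta> 0) \<le> T" unfolding T_def using le by (intro sum_mono) auto
    then have "real (m*m) * \<theta> 0 \<le> T" by (simp add: cardJ)
    then have "\<theta> 0 \<le> T / (real m)^2" using m0 by (simp add: field_simps power2_eq_square)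
    moreover have "T / (real m)^2 + (2 * real m - 1) / (real m)^2 * T = 2 / real m * T"
      using m0 by (simp add: field_simps power2_eq_square)
    ultimately show ?thesis by linarith
  qed
  have "real (m*m) * rr m \<le> 2 / real m * T" using lp b by linarith
  then have "real m * (real (m*m) * rr m) \<le> real m * (2 / real m * T)" using m0 by (intro mult_left_mono) auto
  then have "real m ^ 3 * rr m \<le> 2 * T" using m0 by (simp add: power3_eq_cube field_simps)
  moreover have "T \<le> cost (m*m+1) \<theta>" unfolding cost_split T_def using nn[of 0] by simp
  ultimately show ?thesis by linarith
qed


lemma M_lower: assumes j: "j \<in> JJ m"
  shows "1 / (real m)^2 \<le> M (XX m) (qq m) j 0 \<and> 1 / (real m)^2 \<le> M (XX m) (qq m) j j"
proof -
  note sp = SS_split[OF j]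
  have jk: "j < m*m+1" using JJ_lt[OF j] by simp
  define g where "g = (j-1) div m"
  have gS: "g \<in> SS m j" using sp unfolding g_def by auto
  have g0: "g \<in> SS m 0" using sp unfolding g_def SS_def by auto
  have gX: "g \<in> XX m" using gS SS_props[OF jk] by auto
  have k0: "0 < m*m+1" by simp
  have nn: "\<And>i x. i < m*m+1 \<Longrightarrow> 0 \<le> qq m i x" by (simp add: q_eq)
  have fin: "finite (XX m)" by (simp add: XX_def)
  have "qq m j g * qq m 0 g \<le> M (XX m) (qq m) j 0" unfolding M_def
    by (rule member_le_sum[OF gX _ fin]) (use nn jk in \<open>auto intro!: mult_nonneg_nonneg\<close>)
  moreover have "qq m j g * qq m j g \<le> M (XX m) (qq m) j j" unfolding M_def
    by (rule member_le_sum[OF gX _ fin]) (use nn jk in \<open>auto intro!: mult_nonneg_nonneg\<close>)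
  moreover have "qq m j g * qq m 0 g = 1 / (real m)^2" "qq m j g * qq m j g = 1 / (real m)^2"
    using gS g0 jk k0 by (simp_all add: q_eq power2_eq_square)
  ultimately show ?thesis by simp
qed

lemma rr_m2: "real (m*m) * rr m \<le> 1 \<and> 0 < real (m*m) * rr m"
proof -
  have m0: "0 < real m" using m2 by simp
  have "real (m*m) * rr m \<le> real (m*m) * (1 / (real m)^2)" using rr_bounds by (intro mult_left_mono) auto
  also have "\<dots> = 1" using m0 by (simp add: power2_eq_square)
  finally show ?thesis using rr_bounds m0 by simp
qed

lemma alone_orth: "i < k \<Longrightarrow> 0 \<le> a \<Longrightarrow> alone i a \<in> nonneg_orthant k"
  unfolding alone_def nonneg_orthant_def by auto

lemma fe_of: "feasible (m*m+1) \<Theta> (uu m) (mu m) \<theta> \<Longrightarrow> j \<in> JJ m \<Longrightarrow> muv m \<le> uu m j \<theta>"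
  unfolding feasible_def mu_def using JJ_lt by fastforce

lemma half_le: "i < m*m+1 \<Longrightarrow> 1/2 \<le> uu m i \<theta>"
  unfolding uu_def by (rule covinst.F_ge_half[OF ci])

lemma mu_le: "i < m*m+1 \<Longrightarrow> (i = 0 \<Longrightarrow> True) \<Longrightarrow> (i \<noteq> 0 \<Longrightarrow> muv m \<le> uu m i \<theta>) \<Longrightarrow> mu m i \<le> uu m i \<theta>"
  unfolding mu_def using half_le by auto

lemma JJ_iff: "i < m*m+1 \<Longrightarrow> i \<noteq> 0 \<Longrightarrow> i \<in> JJ m" unfolding JJ_def by auto

lemma opt: "socially_optimal (m*m+1) (nonneg_orthant (m*m+1)) (uu m) (mu m) (thO m)"
  and cost_opt: "cost (m*m+1) (thO m) = real (m*m) * rr m"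
proof -
  define a where "a = real (m*m) * rr m"
  have a: "0 \<le> a" "a \<le> 1" using rr_m2 unfolding a_def by auto
  have m0: "0 < real m" using m2 by simp
  show c: "cost (m*m+1) (thO m) = real (m*m) * rr m"
    unfolding cost_split thO_def by (simp add: alone_def JJ_def)
  have feas: "feasible (m*m+1) (nonneg_orthant (m*m+1)) (uu m) (mu m) (thO m)"
    unfolding feasible_def
  proof (intro conjI allI impI)
    show "thO m \<in> nonneg_orthant (m*m+1)" unfolding thO_def a_def[symmetric] using a by (intro alone_orth) auto
    fix i assume i: "i < m*m+1"
    show "mu m i \<le> uu m i (thO m)"
    proof (rule mu_le[OF i])
      assume "i \<noteq> 0"
      then have iJ: "i \<in> JJ m" using JJ_iff i by blast
      have "uu m i (thO m) = 1/2 + 1/2 * a * M (XX m) (qq m) i 0"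
        unfolding uu_def thO_def a_def[symmetric] by (rule covinst.F_alone[OF ci i _ a]) simp
      moreover have "a * (1 / (real m)^2) \<le> a * M (XX m) (qq m) i 0"
        using M_lower[OF iJ] a by (intro mult_left_mono) auto
      moreover have "a * (1 / (real m)^2) = rr m" unfolding a_def using m0 by (simp add: power2_eq_square)
      ultimately show "muv m \<le> uu m i (thO m)" unfolding muv_eq by simp
    qed simp
  qed
  show "socially_optimal (m*m+1) (nonneg_orthant (m*m+1)) (uu m) (mu m) (thO m)"
    unfolding socially_optimal_def
  proof (intro conjI allI impI feas)
    fix \<theta> assume f: "feasible (m*m+1) (nonneg_orthant (m*m+1)) (uu m) (mu m) \<theta>"
    then have th: "\<theta> \<in> nonneg_orthant (m*m+1)" unfolding feasible_def by simp
    have lp: "real (m*m) * rr m \<le> \<theta> 0 + (2 * real m - 1) / (real m)^2 * (\<Sum>l\<in>JJ m. \<theta> l)"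
      by (rule LP[OF th fe_of[OF f]])
    have T0: "0 \<le> (\<Sum>l\<in>JJ m. \<theta> l)" using orth_nn[OF th] JJ_lt by (intro sum_nonneg) blast
    have "(real m - 1)^2 = (real m)^2 - 2 * real m + 1" by (simp add: power2_eq_square algebra_simps)
    moreover have "0 \<le> (real m - 1)^2" by simp
    ultimately have "2 * real m - 1 \<le> (real m)^2" by linarith
    then have "(2 * real m - 1) / (real m)^2 \<le> 1" using m0 by (simp add: pos_divide_le_eq)
    then have "(2 * real m - 1) / (real m)^2 * (\<Sum>l\<in>JJ m. \<theta> l) \<le> 1 * (\<Sum>l\<in>JJ m. \<theta> l)"
      by (rule mult_right_mono[OF _ T0])
    then show "cost (m*m+1) (thO m) \<le> cost (m*m+1) \<theta>" unfolding c cost_split[of \<theta>] using lp by linarith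
  qed
qed

lemma thS_le: "0 \<le> thS m l \<and> thS m l \<le> 1" using tt_bounds unfolding thS_def by auto

lemma stab: "stable_eq (m*m+1) (nonneg_orthant (m*m+1)) (uu m) (mu m) (thS m)"
  unfolding stable_eq_def
proof (intro conjI notI)
  show "feasible (m*m+1) (nonneg_orthant (m*m+1)) (uu m) (mu m) (thS m)"
    unfolding feasible_def
  proof (intro conjI allI impI)
    show "thS m \<in> nonneg_orthant (m*m+1)" using tt_bounds unfolding nonneg_orthant_def thS_def by auto
    fix i assume i: "i < m*m+1"
    show "mu m i \<le> uu m i (thS m)"
      by (rule mu_le[OF i]) (use F_stab JJ_iff[OF i] in \<open>auto simp: uu_def\<close>)
  qed
next
  assume "\<exists>i<m*m+1. \<exists>x. x < thS m i \<and> (thS m)(i := x) \<in> nonneg_orthant (m*m+1) \<and> mu m i \<le> uu m i ((thS m)(i := x))"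
  then obtain i x where i: "i < m*m+1" and x: "x < thS m i" and o: "(thS m)(i := x) \<in> nonneg_orthant (m*m+1)"
    and le: "mu m i \<le> uu m i ((thS m)(i := x))" by blast
  have x0: "0 \<le> x" using orth_nn[OF o i] by simp
  show False
  proof (cases "i = 0")
    case True then show False using x x0 unfolding thS_def by simp
  next
    case False
    then have iJ: "i \<in> JJ m" using JJ_iff i by blast
    have "F (m*m+1) (XX m) (qq m) i ((thS m)(i := x)) < F (m*m+1) (XX m) (qq m) i (thS m)"
      by (rule covinst.F_strict[OF ci i]) (use thS_le x0 x in auto)
    then show False using le F_stab[OF iJ] False unfolding uu_def mu_def by simp
  qed
qed

lemma stab_lb: assumes st: "stable_eq (m*m+1) (nonneg_orthant (m*m+1)) (uu m) (mu m) \<theta>"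
  shows "real m ^ 3 * rr m / 2 \<le> cost (m*m+1) \<theta>"
proof -
  have f: "feasible (m*m+1) (nonneg_orthant (m*m+1)) (uu m) (mu m) \<theta>" using st unfolding stable_eq_def by simp
  then have th: "\<theta> \<in> nonneg_orthant (m*m+1)" unfolding feasible_def by simp
  have "\<theta> 0 = 0"
  proof (rule ccontr)
    assume ne: "\<theta> 0 \<noteq> 0"
    have "0 < \<theta> 0" using ne orth_nn[OF th, of 0] by simp
    moreover have "\<theta>(0 := 0) \<in> nonneg_orthant (m*m+1)" using th unfolding nonneg_orthant_def by auto
    moreover have "mu m 0 \<le> uu m 0 (\<theta>(0 := 0))" unfolding mu_def using half_le[of 0] by simp
    ultimately show False using st unfolding stable_eq_def by force
  qed
  then have disj: "\<theta> 0 = 0 \<or> (\<forall>l\<in>JJ m. \<theta> 0 \<le> \<theta> l)" by (rule disjI1)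
  have fe: "\<And>j. j \<in> JJ m \<Longrightarrow> muv m \<le> uu m j \<theta>" by (rule fe_of[OF f])
  show ?thesis by (rule key_lb[OF th fe disj])
qed

lemma swap_orth: "\<theta> \<in> nonneg_orthant k \<Longrightarrow> i < k \<Longrightarrow> j < k \<Longrightarrow> swap_entries \<theta> i j \<in> nonneg_orthant k"
  unfolding nonneg_orthant_def swap_entries_def by auto

lemma envy_lb: assumes ef: "envy_free (m*m+1) (nonneg_orthant (m*m+1)) (uu m) (mu m) \<theta>"
  shows "real m ^ 3 * rr m / 2 \<le> cost (m*m+1) \<theta>"
proof -
  have f: "feasible (m*m+1) (nonneg_orthant (m*m+1)) (uu m) (mu m) \<theta>" using ef unfolding envy_free_def by simp
  then have th: "\<theta> \<in> nonneg_orthant (m*m+1)" unfolding feasible_def by simp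
  have "\<forall>l\<in>JJ m. \<theta> 0 \<le> \<theta> l"
  proof (rule ballI, rule ccontr)
    fix l assume l: "l \<in> JJ m" and n: "\<not> \<theta> 0 \<le> \<theta> l"
    have lk: "l < m*m+1" using JJ_lt[OF l] by simp
    have "swap_entries \<theta> 0 l \<in> nonneg_orthant (m*m+1)" using swap_orth[OF th _ lk] by simp
    moreover have "mu m 0 \<le> uu m 0 (swap_entries \<theta> 0 l)" unfolding mu_def using half_le[of 0] by simp
    ultimately show False using ef n lk unfolding envy_free_def by force
  qed
  then have disj: "\<theta> 0 = 0 \<or> (\<forall>l\<in>JJ m. \<theta> 0 \<le> \<theta> l)" by (rule disjI2)
  have fe: "\<And>j. j \<in> JJ m \<Longrightarrow> muv m \<le> uu m j \<theta>" by (rule fe_of[OF f])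
  show ?thesis by (rule key_lb[OF th fe disj])
qed

lemma envy_ex: "envy_free (m*m+1) (nonneg_orthant (m*m+1)) (uu m) (mu m) (thE m)"
  unfolding envy_free_def
proof (intro conjI notI)
  show "feasible (m*m+1) (nonneg_orthant (m*m+1)) (uu m) (mu m) (thE m)"
    unfolding feasible_def
  proof (intro conjI allI impI)
    show "thE m \<in> nonneg_orthant (m*m+1)" unfolding nonneg_orthant_def thE_def by auto
    fix i assume i: "i < m*m+1"
    show "mu m i \<le> uu m i (thE m)"
    proof (rule mu_le[OF i])
      assume "i \<noteq> 0"
      then have iJ: "i \<in> JJ m" using JJ_iff i by blast
      have "F (m*m+1) (XX m) (qq m) i (thS m) \<le> F (m*m+1) (XX m) (qq m) i (thE m)"
        by (rule covinst.F_mono[OF ci i]) (use thS_le in \<open>auto simp: thE_def\<close>)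
      then show "muv m \<le> uu m i (thE m)" using F_stab[OF iJ] unfolding uu_def by simp
    qed simp
  qed
next
  assume "\<exists>i<m*m+1. \<exists>j<m*m+1. thE m j < thE m i \<and> swap_entries (thE m) i j \<in> nonneg_orthant (m*m+1) \<and> mu m i \<le> uu m i (swap_entries (thE m) i j)"
  then show False unfolding thE_def by auto
qed


lemma vtt_props: "l < m*m+1 \<Longrightarrow> 0 \<le> vtt m l \<and> vtt m l \<le> 1"
  and vtt_M: "l \<in> JJ m \<Longrightarrow> vtt m l * M (XX m) (qq m) l l = rr m"
proof -
  have m0: "0 < real m" using m2 by simp
  {
    fix l assume l: "l \<in> JJ m"
    have Mp: "1 / (real m)^2 \<le> M (XX m) (qq m) l l" using M_lower[OF l] by simp
    have Mpos: "0 < M (XX m) (qq m) l l" using Mp m0 by (smt (verit) divide_pos_pos zero_less_power)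
    have "rr m / M (XX m) (qq m) l l \<le> rr m / (1 / (real m)^2)"
      using rr_bounds Mp m0 by (intro divide_left_mono) auto
    also have "\<dots> = real (m*m) * rr m" by (simp add: power2_eq_square)
    also have "\<dots> \<le> 1" using rr_m2 by simp
    finally have "vtt m l \<le> 1" "0 \<le> vtt m l" "vtt m l * M (XX m) (qq m) l l = rr m"
      using l Mpos rr_bounds unfolding vtt_def by auto
  } note * = this
  show "l < m*m+1 \<Longrightarrow> 0 \<le> vtt m l \<and> vtt m l \<le> 1"
    using * unfolding vtt_def by (cases "l \<in> JJ m") auto
  show "l \<in> JJ m \<Longrightarrow> vtt m l * M (XX m) (qq m) l l = rr m" using * by blast
qed

lemma cu: "coverage_u (m*m+1) (XX m) (uniform_q (SS m)) = uu m"
proof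
  fix i show "coverage_u (m*m+1) (XX m) (uniform_q (SS m)) i = uu m i"
  proof
    fix \<theta> show "coverage_u (m*m+1) (XX m) (uniform_q (SS m)) i \<theta> = uu m i \<theta>"
      unfolding uu_def qq_def[symmetric]
      by (rule cov_F) (auto simp: XX_def intro: covinst.q1[OF ci])
  qed
qed

lemma collab: "collab_problem (m*m+1) (nonneg_orthant (m*m+1)) (uu m) (mu m) (vtt m)"
  unfolding collab_problem_def
proof (intro conjI allI impI ballI subset_refl)
  fix i \<theta> \<theta>' assume i: "i < m*m+1" and th: "\<theta> \<in> nonneg_orthant (m*m+1)" and "\<theta>' \<in> nonneg_orthant (m*m+1)"
    and le: "\<forall>j<m*m+1. \<theta> j \<le> \<theta>' j"
  show "uu m i \<theta> \<le> uu m i \<theta>'" unfolding uu_def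
    by (rule covinst.F_mono[OF ci i]) (use le orth_nn[OF th] in auto)
next
  fix i assume i: "i < m*m+1"
  show "0 \<le> vtt m i" using vtt_props[OF i] by simp
  show "alone i (vtt m i) \<in> nonneg_orthant (m*m+1)" using vtt_props[OF i] i by (intro alone_orth) auto
  show "mu m i \<le> uu m i (alone i (vtt m i))"
  proof (rule mu_le[OF i])
    assume "i \<noteq> 0"
    then have iJ: "i \<in> JJ m" using JJ_iff i by blast
    have "uu m i (alone i (vtt m i)) = 1/2 + 1/2 * vtt m i * M (XX m) (qq m) i i"
      unfolding uu_def using vtt_props[OF i] by (intro covinst.F_alone[OF ci i i]) auto
    then show "muv m \<le> uu m i (alone i (vtt m i))" using vtt_M[OF iJ] unfolding muv_eq by simp
  qed simp
qed

lemma wbm: "well_behaved (m*m+1) (uu m) (vtt m)"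
  unfolding uu_def by (rule covinst.wb[OF ci]) (rule vtt_props)

lemma sqrt_bound: "1/4 * sqrt (real (m*m+1)) \<le> real m / 2"
proof -
  have "1 \<le> real m" using m2 by simp
  then have "1 * 1 \<le> real m * real m" by (intro mult_mono) auto
  then have "real (m*m+1) \<le> (2 * real m)^2" by (simp add: power2_eq_square)
  then have a: "sqrt (real (m*m+1)) \<le> sqrt ((2 * real m)^2)" by (rule real_sqrt_le_mono)
  have b: "sqrt ((2 * real m)^2) = 2 * real m" by (rule real_sqrt_unique) auto
  have "sqrt (real (m*m+1)) \<le> 2 * real m" using a b by linarith
  then show ?thesis by simp
qed

lemma cov_k: "\<exists>X S \<mu> vt. finite X \<and>
        (\<exists>s. \<forall>i<m*m+1. S i \<subseteq> X \<and> S i \<noteq> {} \<and> card (S i) = s) \<and>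
        collab_problem (m*m+1) (nonneg_orthant (m*m+1)) (coverage_u (m*m+1) X (uniform_q S)) \<mu> vt \<and>
        well_behaved (m*m+1) (coverage_u (m*m+1) X (uniform_q S)) vt \<and>
        bad_prices (m*m+1) (nonneg_orthant (m*m+1)) (coverage_u (m*m+1) X (uniform_q S)) \<mu> (1/4 * sqrt (real (m*m+1)))"
proof (intro exI conjI)
  show "finite (XX m)" by (simp add: XX_def)
  show "\<forall>i<m*m+1. SS m i \<subseteq> XX m \<and> SS m i \<noteq> {} \<and> card (SS m i) = m" using SS_props by blast
  show "collab_problem (m*m+1) (nonneg_orthant (m*m+1)) (coverage_u (m*m+1) (XX m) (uniform_q (SS m))) (mu m) (vtt m)"
    unfolding cu by (rule collab)
  show "well_behaved (m*m+1) (coverage_u (m*m+1) (XX m) (uniform_q (SS m))) (vtt m)"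
    unfolding cu by (rule wbm)
  have m0: "0 < real m" using m2 by simp
  have rp: "0 < rr m" using rr_bounds by simp
  have eqQ: "(real m ^ 3 * rr m / 2) / cost (m*m+1) (thO m) = real m / 2"
    unfolding cost_opt using m0 rp by (simp add: power3_eq_cube field_simps)
  have r: "1/4 * sqrt (real (m*m+1)) \<le> (real m ^ 3 * rr m / 2) / cost (m*m+1) (thO m)"
    unfolding eqQ by (rule sqrt_bound)
  show "bad_prices (m*m+1) (nonneg_orthant (m*m+1)) (coverage_u (m*m+1) (XX m) (uniform_q (SS m))) (mu m) (1/4 * sqrt (real (m*m+1)))"
    unfolding cu
    by (rule bad_pricesI[OF opt stab envy_ex stab_lb envy_lb _ r]) (use rr_m2 cost_opt in auto)
qed

end

definition WW :: "nat \<Rightarrow> nat \<Rightarrow> nat \<Rightarrow> real" where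
  "WW m = (\<lambda>i j. if i = j then 1 else if j = 0 then 1 / real m else 0)"
definition lmu :: "nat \<Rightarrow> real" where "lmu = (\<lambda>i. if i = 0 then 0 else 1)"
definition lvt :: "nat \<Rightarrow> real" where "lvt = (\<lambda>i. if i = 0 then 0 else 1)"

lemma lin_upd:
  assumes j: "j < k"
  shows "linear_u k W i (\<theta>(j := t)) = (linear_u k W i \<theta> - W i j * \<theta> j) + W i j * t"
proof -
  have "linear_u k W i (\<theta>(j := t)) = W i j * t + (\<Sum>l\<in>{..<k}-{j}. W i l * (\<theta>(j := t)) l)"
    unfolding linear_u_def using j by (subst sum.remove[of _ j]) auto
  also have "(\<Sum>l\<in>{..<k}-{j}. W i l * (\<theta>(j := t)) l) = (\<Sum>l\<in>{..<k}-{j}. W i l * \<theta> l)"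
    by (intro sum.cong) auto
  also have "\<dots> = linear_u k W i \<theta> - W i j * \<theta> j"
    unfolding linear_u_def using j by (subst sum.remove[of _ j]) auto
  finally show ?thesis by linarith
qed

lemma lin_wb:
  assumes W: "\<forall>i<k. \<forall>j<k. 0 \<le> W i j \<and> W i j \<le> 1" "\<forall>i<k. W i i = 1"
  shows "well_behaved k (linear_u k W) vt"
  unfolding well_behaved_def Let_def
proof (intro allI impI)
  fix i assume i: "i < k"
  have D: "((\<lambda>t. linear_u k W i (\<theta>(j := t))) has_real_derivative W i j) (at s within S)" if j: "j < k" for \<theta> j s S
  proof -
    have "((\<lambda>t. (linear_u k W i \<theta> - W i j * \<theta> j) + W i j * t) has_real_derivative W i j) (at s within S)"
      by (auto intro!: derivative_eq_intros)
    then show ?thesis using lin_upd[OF j] by simp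
  qed
  have ok: "j < k \<Longrightarrow> (if j = i then 1 \<le> W i j else 0 \<le> W i j \<and> W i j \<le> 1)" for j
    using W i by auto
  show "\<exists>c1 c2. 0 \<le> c1 \<and> 0 < c2 \<and>
        (\<forall>\<theta>\<in>box k vt. \<forall>j<k.
            (\<theta> j < vt j \<longrightarrow> (\<exists>D. ((\<lambda>t. linear_u k W i (\<theta>(j := t))) has_real_derivative D) (at (\<theta> j) within {\<theta> j..}) \<and> (if j = i then c2 \<le> D else 0 \<le> D \<and> D \<le> c1))) \<and>
            (0 < \<theta> j \<longrightarrow> (\<exists>D. ((\<lambda>t. linear_u k W i (\<theta>(j := t))) has_real_derivative D) (at (\<theta> j) within {..\<theta> j}) \<and> (if j = i then c2 \<le> D else 0 \<le> D \<and> D \<le> c1))))"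
    apply (rule exI[of _ 1], rule exI[of _ 1])
    apply (intro conjI ballI allI impI)
       apply simp
      apply simp
     subgoal for \<theta> j using D[of j \<theta>] ok[of j] by blast
    subgoal for \<theta> j using D[of j \<theta>] ok[of j] by blast
    done
qed

definition thSl :: "nat \<Rightarrow> nat \<Rightarrow> real" where "thSl m = (\<lambda>l. if l \<in> JJ m then 1 else 0)"

context fixes m :: nat assumes m2: "2 \<le> m"
begin

lemma lin_eval: assumes i: "i < m*m+1"
  shows "linear_u (m*m+1) (WW m) i \<theta> = (if i = 0 then \<theta> 0 else \<theta> i + \<theta> 0 / real m)"
proof -
  have "linear_u (m*m+1) (WW m) i \<theta> = WW m i 0 * \<theta> 0 + (\<Sum>l\<in>JJ m. WW m i l * \<theta> l)"
    unfolding linear_u_def by (rule split0[OF m2])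
  also have "(\<Sum>l\<in>JJ m. WW m i l * \<theta> l) = (\<Sum>l\<in>JJ m. if l = i then \<theta> i else 0)"
    by (intro sum.cong refl) (auto simp: WW_def JJ_def)
  also have "\<dots> = (if i \<in> JJ m then \<theta> i else 0)" by (subst sum.delta) (auto simp: JJ_def)
  finally show ?thesis using i by (auto simp: WW_def JJ_def)
qed

lemma lnn: "\<theta> \<in> nonneg_orthant (m*m+1) \<Longrightarrow> 0 \<le> linear_u (m*m+1) (WW m) 0 \<theta>"
proof -
  assume th: "\<theta> \<in> nonneg_orthant (m*m+1)"
  have "0 \<le> \<theta> 0" using orth_nn[OF m2 th] by simp
  then show ?thesis using lin_eval[of 0 \<theta>] by simp
qed

lemma lfe: "feasible (m*m+1) \<Theta> (linear_u (m*m+1) (WW m)) lmu \<theta> \<Longrightarrow> j \<in> JJ m \<Longrightarrow> 1 \<le> \<theta> j + \<theta> 0 / real m"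
  unfolding feasible_def lmu_def using lin_eval JJ_lt[OF m2] by (metis not_one_le_zero)


lemma cost_l: "cost (m*m+1) \<theta> = \<theta> 0 + (\<Sum>l\<in>JJ m. \<theta> l)" by (rule cost_split[OF m2])

lemma JJl: "j \<in> JJ m \<Longrightarrow> j < m*m+1 \<and> j \<noteq> 0" using JJ_lt[OF m2] by fastforce

lemma key_l:
  assumes f: "feasible (m*m+1) (nonneg_orthant (m*m+1)) (linear_u (m*m+1) (WW m)) lmu \<theta>"
    and c: "\<theta> 0 = 0 \<or> (\<forall>l\<in>JJ m. \<theta> 0 \<le> \<theta> l)"
  shows "real (m*m) / 2 \<le> cost (m*m+1) \<theta>"
proof -
  have th: "\<theta> \<in> nonneg_orthant (m*m+1)" using f unfolding feasible_def by simp
  have m1: "1 \<le> real m" using m2 by simp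
  have h: "1/2 \<le> \<theta> l" if l: "l \<in> JJ m" for l
  proof -
    have lk: "l < m*m+1" using JJl[OF l] by simp
    have nn: "0 \<le> \<theta> l" using orth_nn[OF m2 th lk] .
    have e: "1 \<le> \<theta> l + \<theta> 0 / real m" by (rule lfe[OF f l])
    show ?thesis
    proof (cases "\<theta> 0 = 0")
      case True then show ?thesis using e by simp
    next
      case False
      then have "\<theta> 0 \<le> \<theta> l" using c l by auto
      then have "\<theta> 0 / real m \<le> \<theta> l / real m" using m1 by (simp add: divide_right_mono)
      moreover have "\<theta> l / real m \<le> \<theta> l" using nn m1 by (simp add: divide_le_eq mult_le_cancel_left1)
      ultimately show ?thesis using e by linarith
    qed
  qed
  have "(\<Sum>l\<in>JJ m. (1/2::real)) \<le> (\<Sum>l\<in>JJ m. \<theta> l)" by (intro sum_mono h)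
  then have "real (m*m) / 2 \<le> (\<Sum>l\<in>JJ m. \<theta> l)" by (simp add: cardJ[OF m2])
  moreover have "0 \<le> \<theta> 0" using orth_nn[OF m2 th, of 0] by simp
  ultimately show ?thesis unfolding cost_l by linarith
qed

lemma opt_l: "socially_optimal (m*m+1) (nonneg_orthant (m*m+1)) (linear_u (m*m+1) (WW m)) lmu (alone 0 (real m))"
  and cost_opt_l: "cost (m*m+1) (alone 0 (real m)) = real m"
proof -
  have m1: "1 \<le> real m" using m2 by simp
  show c: "cost (m*m+1) (alone 0 (real m)) = real m"
    unfolding cost_l by (simp add: alone_def JJ_def)
  have feas: "feasible (m*m+1) (nonneg_orthant (m*m+1)) (linear_u (m*m+1) (WW m)) lmu (alone 0 (real m))"
    unfolding feasible_def
  proof (intro conjI allI impI)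
    show "alone 0 (real m) \<in> nonneg_orthant (m*m+1)" by (rule alone_orth[OF m2]) auto
    fix i assume i: "i < m*m+1"
    show "lmu i \<le> linear_u (m*m+1) (WW m) i (alone 0 (real m))"
      unfolding lin_eval[OF i] using m1 by (simp add: lmu_def alone_def)
  qed
  show "socially_optimal (m*m+1) (nonneg_orthant (m*m+1)) (linear_u (m*m+1) (WW m)) lmu (alone 0 (real m))"
    unfolding socially_optimal_def
  proof (intro conjI allI impI feas)
    fix \<theta> assume f: "feasible (m*m+1) (nonneg_orthant (m*m+1)) (linear_u (m*m+1) (WW m)) lmu \<theta>"
    then have th: "\<theta> \<in> nonneg_orthant (m*m+1)" unfolding feasible_def by simp
    have t0: "0 \<le> \<theta> 0" using orth_nn[OF m2 th, of 0] by simp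
    have T0: "0 \<le> (\<Sum>l\<in>JJ m. \<theta> l)" using orth_nn[OF m2 th] JJl by (intro sum_nonneg) blast
    show "cost (m*m+1) (alone 0 (real m)) \<le> cost (m*m+1) \<theta>"
    proof (cases "real m \<le> \<theta> 0")
      case True then show ?thesis using c cost_l[of \<theta>] T0 by linarith
    next
      case False
      have "(\<Sum>l\<in>JJ m. 1 - \<theta> 0 / real m) \<le> (\<Sum>l\<in>JJ m. \<theta> l)"
        by (intro sum_mono) (use lfe[OF f] in force)
      then have "real (m*m) * (1 - \<theta> 0 / real m) \<le> (\<Sum>l\<in>JJ m. \<theta> l)" by (simp add: cardJ[OF m2])
      moreover have "real (m*m) * (1 - \<theta> 0 / real m) = real m * real m - real m * \<theta> 0"
        using m1 by (simp add: field_simps)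
      ultimately have e1: "real m * real m - real m * \<theta> 0 \<le> (\<Sum>l\<in>JJ m. \<theta> l)" by linarith
      have "(real m - 1) * \<theta> 0 \<le> (real m - 1) * real m"
        using False m1 by (intro mult_left_mono) auto
      then have e2: "real m * \<theta> 0 - \<theta> 0 \<le> real m * real m - real m" by (simp add: algebra_simps)
      show ?thesis using c cost_l[of \<theta>] e1 e2 by linarith
    qed
  qed
qed

lemma stab_l: "stable_eq (m*m+1) (nonneg_orthant (m*m+1)) (linear_u (m*m+1) (WW m)) lmu (thSl m)"
  unfolding stable_eq_def
proof (intro conjI notI)
  show "feasible (m*m+1) (nonneg_orthant (m*m+1)) (linear_u (m*m+1) (WW m)) lmu (thSl m)"
    unfolding feasible_def
  proof (intro conjI allI impI)
    show "thSl m \<in> nonneg_orthant (m*m+1)" unfolding nonneg_orthant_def thSl_def JJ_def by auto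
    fix i assume i: "i < m*m+1"
    show "lmu i \<le> linear_u (m*m+1) (WW m) i (thSl m)"
      unfolding lin_eval[OF i] using i by (simp add: lmu_def thSl_def JJ_def)
  qed
next
  assume "\<exists>i<m*m+1. \<exists>x. x < thSl m i \<and> (thSl m)(i := x) \<in> nonneg_orthant (m*m+1) \<and> lmu i \<le> linear_u (m*m+1) (WW m) i ((thSl m)(i := x))"
  then obtain i x where i: "i < m*m+1" and x: "x < thSl m i" and o: "(thSl m)(i := x) \<in> nonneg_orthant (m*m+1)"
    and le: "lmu i \<le> linear_u (m*m+1) (WW m) i ((thSl m)(i := x))" by blast
  have x0: "0 \<le> x" using orth_nn[OF m2 o i] by simp
  show False
  proof (cases "i = 0")
    case True then show False using x x0 unfolding thSl_def JJ_def by simp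
  next
    case False
    then have "i \<in> JJ m" using i by (simp add: JJ_def)
    then show False using le x False unfolding lin_eval[OF i] lmu_def thSl_def by (simp add: JJ_def)
  qed
qed

lemma stab_l_lb: assumes st: "stable_eq (m*m+1) (nonneg_orthant (m*m+1)) (linear_u (m*m+1) (WW m)) lmu \<theta>"
  shows "real (m*m) / 2 \<le> cost (m*m+1) \<theta>"
proof -
  have f: "feasible (m*m+1) (nonneg_orthant (m*m+1)) (linear_u (m*m+1) (WW m)) lmu \<theta>" using st unfolding stable_eq_def by simp
  then have th: "\<theta> \<in> nonneg_orthant (m*m+1)" unfolding feasible_def by simp
  have "\<theta> 0 = 0"
  proof (rule ccontr)
    assume ne: "\<theta> 0 \<noteq> 0"
    have "0 < \<theta> 0" using ne orth_nn[OF m2 th, of 0] by simp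
    moreover have o: "\<theta>(0 := 0) \<in> nonneg_orthant (m*m+1)" using th unfolding nonneg_orthant_def by auto
    moreover have "lmu 0 \<le> linear_u (m*m+1) (WW m) 0 (\<theta>(0 := 0))" unfolding lmu_def using lnn[OF o] by simp
    ultimately show False using st unfolding stable_eq_def by force
  qed
  then have disj: "\<theta> 0 = 0 \<or> (\<forall>l\<in>JJ m. \<theta> 0 \<le> \<theta> l)" by (rule disjI1)
  show ?thesis by (rule key_l[OF f disj])
qed

lemma envy_l_lb: assumes ef: "envy_free (m*m+1) (nonneg_orthant (m*m+1)) (linear_u (m*m+1) (WW m)) lmu \<theta>"
  shows "real (m*m) / 2 \<le> cost (m*m+1) \<theta>"
proof -
  have f: "feasible (m*m+1) (nonneg_orthant (m*m+1)) (linear_u (m*m+1) (WW m)) lmu \<theta>" using ef unfolding envy_free_def by simp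
  then have th: "\<theta> \<in> nonneg_orthant (m*m+1)" unfolding feasible_def by simp
  have "\<forall>l\<in>JJ m. \<theta> 0 \<le> \<theta> l"
  proof (rule ballI, rule ccontr)
    fix l assume l: "l \<in> JJ m" and n: "\<not> \<theta> 0 \<le> \<theta> l"
    have lk: "l < m*m+1" using JJl[OF l] by simp
    have o: "swap_entries \<theta> 0 l \<in> nonneg_orthant (m*m+1)" using swap_orth[OF m2 th _ lk] by simp
    moreover have "lmu 0 \<le> linear_u (m*m+1) (WW m) 0 (swap_entries \<theta> 0 l)" unfolding lmu_def using lnn[OF o] by simp
    ultimately show False using ef n lk unfolding envy_free_def by force
  qed
  then have disj: "\<theta> 0 = 0 \<or> (\<forall>l\<in>JJ m. \<theta> 0 \<le> \<theta> l)" by (rule disjI2)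
  show ?thesis by (rule key_l[OF f disj])
qed

lemma envy_ex_l: "envy_free (m*m+1) (nonneg_orthant (m*m+1)) (linear_u (m*m+1) (WW m)) lmu (thE m)"
  unfolding envy_free_def
proof (intro conjI notI)
  show "feasible (m*m+1) (nonneg_orthant (m*m+1)) (linear_u (m*m+1) (WW m)) lmu (thE m)"
    unfolding feasible_def
  proof (intro conjI allI impI)
    show "thE m \<in> nonneg_orthant (m*m+1)" unfolding nonneg_orthant_def thE_def by auto
    fix i assume i: "i < m*m+1"
    show "lmu i \<le> linear_u (m*m+1) (WW m) i (thE m)"
      unfolding lin_eval[OF i] using i by (simp add: lmu_def thE_def)
  qed
next
  assume "\<exists>i<m*m+1. \<exists>j<m*m+1. thE m j < thE m i \<and> swap_entries (thE m) i j \<in> nonneg_orthant (m*m+1) \<and> lmu i \<le> linear_u (m*m+1) (WW m) i (swap_entries (thE m) i j)"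
  then show False unfolding thE_def by auto
qed

lemma W_props: "\<forall>i<m*m+1. \<forall>j<m*m+1. 0 \<le> WW m i j \<and> WW m i j \<le> 1"
  "\<forall>i<m*m+1. WW m i i = 1"
  "\<forall>i<m*m+1. \<forall>j<m*m+1. j \<noteq> i \<longrightarrow> WW m i j \<le> 2 / sqrt (real (m*m+1))"
proof -
  have m1: "1 \<le> real m" using m2 by simp
  show "\<forall>i<m*m+1. \<forall>j<m*m+1. 0 \<le> WW m i j \<and> WW m i j \<le> 1" using m1 by (simp add: WW_def)
  show "\<forall>i<m*m+1. WW m i i = 1" by (simp add: WW_def)
  have sb: "sqrt (real (m*m+1)) \<le> 2 * real m" using sqrt_bound[OF m2] by simp
  have sp: "0 < sqrt (real (m*m+1))" by (rule real_sqrt_gt_zero, rule of_nat_0_less_iff[THEN iffD2]) simp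
  have "1 / real m \<le> 2 / sqrt (real (m*m+1))"
    using sb sp m1 by (simp add: divide_simps)
  moreover have "0 \<le> 2 / sqrt (real (m*m+1))" by simp
  ultimately show "\<forall>i<m*m+1. \<forall>j<m*m+1. j \<noteq> i \<longrightarrow> WW m i j \<le> 2 / sqrt (real (m*m+1))"
    by (simp add: WW_def)
qed

lemma collab_l: "collab_problem (m*m+1) (nonneg_orthant (m*m+1)) (linear_u (m*m+1) (WW m)) lmu lvt"
  unfolding collab_problem_def
proof (intro conjI allI impI ballI subset_refl)
  fix i \<theta> \<theta>' assume i: "i < m*m+1" and "\<theta> \<in> nonneg_orthant (m*m+1)" "\<theta>' \<in> nonneg_orthant (m*m+1)"
    and le: "\<forall>j<m*m+1. \<theta> j \<le> \<theta>' j"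
  show "linear_u (m*m+1) (WW m) i \<theta> \<le> linear_u (m*m+1) (WW m) i \<theta>'"
    unfolding linear_u_def using le W_props(1) i by (intro sum_mono mult_left_mono) auto
next
  fix i assume i: "i < m*m+1"
  show "0 \<le> lvt i" by (simp add: lvt_def)
  show "alone i (lvt i) \<in> nonneg_orthant (m*m+1)" using i by (intro alone_orth[OF m2]) (auto simp: lvt_def)
  show "lmu i \<le> linear_u (m*m+1) (WW m) i (alone i (lvt i))"
    unfolding lin_eval[OF i] using i by (simp add: lmu_def lvt_def alone_def)
qed

lemma lin_k: "\<exists>W \<mu> vt.
        (\<forall>i<m*m+1. \<forall>j<m*m+1. 0 \<le> W i j \<and> W i j \<le> 1) \<and> (\<forall>i<m*m+1. W i i = 1) \<and>
        (\<forall>i<m*m+1. \<forall>j<m*m+1. j \<noteq> i \<longrightarrow> W i j \<le> 2 / sqrt (real (m*m+1))) \<and>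
        collab_problem (m*m+1) (nonneg_orthant (m*m+1)) (linear_u (m*m+1) W) \<mu> vt \<and>
        well_behaved (m*m+1) (linear_u (m*m+1) W) vt \<and>
        bad_prices (m*m+1) (nonneg_orthant (m*m+1)) (linear_u (m*m+1) W) \<mu> (1/4 * sqrt (real (m*m+1)))"
proof (intro exI conjI)
  show "\<forall>i<m*m+1. \<forall>j<m*m+1. 0 \<le> WW m i j \<and> WW m i j \<le> 1" "\<forall>i<m*m+1. WW m i i = 1"
    "\<forall>i<m*m+1. \<forall>j<m*m+1. j \<noteq> i \<longrightarrow> WW m i j \<le> 2 / sqrt (real (m*m+1))" by (rule W_props)+
  show "collab_problem (m*m+1) (nonneg_orthant (m*m+1)) (linear_u (m*m+1) (WW m)) lmu lvt" by (rule collab_l)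
  show "well_behaved (m*m+1) (linear_u (m*m+1) (WW m)) lvt" by (rule lin_wb) (rule W_props)+
  have m0: "0 < real m" using m2 by simp
  have eqQ: "(real (m*m) / 2) / cost (m*m+1) (alone 0 (real m)) = real m / 2"
    unfolding cost_opt_l using m0 by (simp add: field_simps)
  have r: "1/4 * sqrt (real (m*m+1)) \<le> (real (m*m) / 2) / cost (m*m+1) (alone 0 (real m))"
    unfolding eqQ by (rule sqrt_bound[OF m2])
  show "bad_prices (m*m+1) (nonneg_orthant (m*m+1)) (linear_u (m*m+1) (WW m)) lmu (1/4 * sqrt (real (m*m+1)))"
    by (rule bad_pricesI[OF opt_l stab_l envy_ex_l stab_l_lb envy_l_lb _ r]) (use cost_opt_l m0 in auto)
qed

end
theorem theorem4:
  "\<exists>c::real. 0 < c \<and>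
     infinite {k::nat. \<exists>X S \<mu> vt. finite X \<and>
        (\<exists>s. \<forall>i<k. S i \<subseteq> X \<and> S i \<noteq> {} \<and> card (S i) = s) \<and>
        collab_problem k (nonneg_orthant k) (coverage_u k X (uniform_q S)) \<mu> vt \<and>
        well_behaved k (coverage_u k X (uniform_q S)) vt \<and>
        bad_prices k (nonneg_orthant k) (coverage_u k X (uniform_q S)) \<mu> (c * sqrt (real k))} \<and>
     (\<exists>C::real. infinite {k::nat. \<exists>W \<mu> vt.
        (\<forall>i<k. \<forall>j<k. 0 \<le> W i j \<and> W i j \<le> 1) \<and> (\<forall>i<k. W i i = 1) \<and>
        (\<forall>i<k. \<forall>j<k. j \<noteq> i \<longrightarrow> W i j \<le> C / sqrt (real k)) \<and>
        collab_problem k (nonneg_orthant k) (linear_u k W) \<mu> vt \<and>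
        well_behaved k (linear_u k W) vt \<and>
        bad_prices k (nonneg_orthant k) (linear_u k W) \<mu> (c * sqrt (real k))})"
proof -
  define f where "f = (\<lambda>n::nat. (n+2)*(n+2)+1)"
  have sm: "strict_mono f" unfolding f_def
  proof (rule strict_monoI)
    fix x y :: nat assume "x < y"
    then have "(x+2)*(x+2) < (y+2)*(y+2)" by (intro mult_strict_mono) auto
    then show "(x+2)*(x+2)+1 < (y+2)*(y+2)+1" by simp
  qed
  have inf: "infinite (range f)" by (rule range_inj_infinite[OF strict_mono_imp_inj_on[OF sm]])
  have A: "range f \<subseteq> {k::nat. \<exists>X S \<mu> vt. finite X \<and>
        (\<exists>s. \<forall>i<k. S i \<subseteq> X \<and> S i \<noteq> {} \<and> card (S i) = s) \<and>
        collab_problem k (nonneg_orthant k) (coverage_u k X (uniform_q S)) \<mu> vt \<and>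
        well_behaved k (coverage_u k X (uniform_q S)) vt \<and>
        bad_prices k (nonneg_orthant k) (coverage_u k X (uniform_q S)) \<mu> (1/4 * sqrt (real k))}"
  proof
    fix k assume "k \<in> range f"
    then obtain n where k: "k = (n+2)*(n+2)+1" unfolding f_def by blast
    show "k \<in> {k::nat. \<exists>X S \<mu> vt. finite X \<and>
        (\<exists>s. \<forall>i<k. S i \<subseteq> X \<and> S i \<noteq> {} \<and> card (S i) = s) \<and>
        collab_problem k (nonneg_orthant k) (coverage_u k X (uniform_q S)) \<mu> vt \<and>
        well_behaved k (coverage_u k X (uniform_q S)) vt \<and>
        bad_prices k (nonneg_orthant k) (coverage_u k X (uniform_q S)) \<mu> (1/4 * sqrt (real k))}"
      unfolding k using cov_k[of "n+2"] by simp
  qed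
  have B: "range f \<subseteq> {k::nat. \<exists>W \<mu> vt.
        (\<forall>i<k. \<forall>j<k. 0 \<le> W i j \<and> W i j \<le> 1) \<and> (\<forall>i<k. W i i = 1) \<and>
        (\<forall>i<k. \<forall>j<k. j \<noteq> i \<longrightarrow> W i j \<le> 2 / sqrt (real k)) \<and>
        collab_problem k (nonneg_orthant k) (linear_u k W) \<mu> vt \<and>
        well_behaved k (linear_u k W) vt \<and>
        bad_prices k (nonneg_orthant k) (linear_u k W) \<mu> (1/4 * sqrt (real k))}"
  proof
    fix k assume "k \<in> range f"
    then obtain n where k: "k = (n+2)*(n+2)+1" unfolding f_def by blast
    show "k \<in> {k::nat. \<exists>W \<mu> vt.
        (\<forall>i<k. \<forall>j<k. 0 \<le> W i j \<and> W i j \<le> 1) \<and> (\<forall>i<k. W i i = 1) \<and>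
        (\<forall>i<k. \<forall>j<k. j \<noteq> i \<longrightarrow> W i j \<le> 2 / sqrt (real k)) \<and>
        collab_problem k (nonneg_orthant k) (linear_u k W) \<mu> vt \<and>
        well_behaved k (linear_u k W) vt \<and>
        bad_prices k (nonneg_orthant k) (linear_u k W) \<mu> (1/4 * sqrt (real k))}"
      unfolding k using lin_k[of "n+2"] by simp
  qed
  show ?thesis
    apply (rule exI[of _ "1/4"])
    apply (intro conjI)
      apply simp
     apply (rule infinite_super[OF A inf])
    apply (rule exI[of _ 2])
    apply (rule infinite_super[OF B inf])
    done
qed

end
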